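(* Let $n,m,n_g,n_w,r$, $A\in\mathbb{R}^{n\times n}$, $S\in\mathbb{R}^{n\times n_g}$, $C\in\mathbb{R}^{m\times n}$, $D_\omega\in\mathbb{R}^{n\times n_w}$ be given, $n_z=n+rn_g$, $d_n=(r-1)n_g$, and define $$A_a=\begin{bmatrix} A & S & 0\\ 0 & 0 & I_{d_n}\\ 0&0&0\end{bmatrix},\quad D_a=\begin{bmatrix} D_\omega & 0\\ 0&0\\ 0 & I_{n_g}\end{bmatrix},\quad C_a=\begin{bmatrix} C & 0\end{bmatrix},\quad \bar C_a=\begin{bmatrix} I_n & 0 & 0\\ 0 & I_{n_g} & 0\end{bmatrix}.$$ Suppose there exist $P\in\mathbb{R}^{n_z\times n_z}$, $P\succ 0$, $R,Q\in\mathbb{R}^{n_z\times m}$, a symmetric matrix $Z$, and a scalar $\bar\gamma>0$ such that $$\begin{bmatrix} X & Q & -R\\ * & -\bar\gamma I & 0\\ * & * & -\bar\gamma I\end{bmatrix}\prec 0,\qquad \begin{bmatrix} P & \bar C_a^\top\\ * & Z\end{bmatrix}\succ 0,\qquad \operatorname{trace}(Z)<\bar\gamma,$$ where $X:=A_a^\top P+A_a^\top C_a^\top R^\top-C_a^\top Q^\top+PA_a+RC_aA_a-QC_a$. Let $E=P^{-1}R$, $K=P^{-1}Q$, $M=I+EC_a$, $N=MA_a-KC_a$, $\bar B=[K\ \ -E]$, and $T_{e_d\nu_a}(s)=\bar C_a(sI-N)^{-1}\bar B$ (the transfer matrix from $\nu_a$ to $e_d=\bar C_ae$ of the error dynamics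 $\dot e=Ne-MD_a\omega_a+\bar B\nu_a$). Then $\|T_{e_d\nu_a}\|_{H_2}<\bar\gamma$.
   Context: $*$ denotes the block that makes the matrix symmetric. The $H_2$-norm is $\|T\|_{H_2}=\sqrt{\frac{1}{2\pi}\operatorname{trace}\int_{-\infty}^{\infty}T(i\mu)T^H(i\mu)\,d\mu}$, with $T^H$ the Hermitian transpose. *)

theory Defs
  imports "HOL-Analysis.Analysis" "Jordan_Normal_Form.Schur_Decomposition"
          "Jordan_Normal_Form.Gauss_Jordan_Elimination"
begin

definition hcat :: "'a::zero mat \<Rightarrow> 'a mat \<Rightarrow> 'a mat" where
  "hcat X Y = four_block_mat X Y (0\<^sub>m 0 (dim_col X)) (0\<^sub>m 0 (dim_col Y))"

definition vcat :: "'a::zero mat \<Rightarrow> 'a mat \<Rightarrow> 'a mat" where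
  "vcat X Y = append_rows X Y"

definition mtrace :: "'a::comm_monoid_add mat \<Rightarrow> 'a" where
  "mtrace M = (\<Sum>i<dim_row M. M $$ (i,i))"

(* matrix inverse (meaningful for invertible square matrices) *)
definition minv :: "'a::field mat \<Rightarrow> 'a mat" where
  "minv M = the (mat_inverse M)"

definition symmetric_mat :: "real mat \<Rightarrow> nat \<Rightarrow> bool" where
  "symmetric_mat M k \<longleftrightarrow> M \<in> carrier_mat k k \<and> transpose_mat M = M"

definition pos_def :: "real mat \<Rightarrow> nat \<Rightarrow> bool" where
  "pos_def M k \<longleftrightarrow> symmetric_mat M k \<and>
     (\<forall>x \<in> carrier_vec k. x \<noteq> 0\<^sub>v k \<longrightarrow> scalar_prod x (M *\<^sub>v x) > 0)"

definition neg_def :: "real mat \<Rightarrow> nat \<Rightarrow> bool" where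
  "neg_def M k \<longleftrightarrow> pos_def (- M) k"

definition cmat :: "real mat \<Rightarrow> complex mat" where
  "cmat M = map_mat complex_of_real M"

definition transfer :: "real mat \<Rightarrow> real mat \<Rightarrow> real mat \<Rightarrow> complex \<Rightarrow> complex mat" where
  "transfer Cb N Bb s =
     cmat Cb * minv (s \<cdot>\<^sub>m 1\<^sub>m (dim_row N) - cmat N) * cmat Bb"

definition H2_integrand :: "(complex \<Rightarrow> complex mat) \<Rightarrow> real \<Rightarrow> complex mat" where
  "H2_integrand T \<mu> = T (\<i> * complex_of_real \<mu>) * mat_adjoint (T (\<i> * complex_of_real \<mu>))"

(* the H2 norm is finite: every entry of T(i\<mu>)T(i\<mu>)^H is integrable over the real line
   (p = number of outputs of T) *)
definition H2_finite :: "nat \<Rightarrow> (complex \<Rightarrow> complex mat) \<Rightarrow> bool" where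
  "H2_finite p T \<longleftrightarrow>
     (\<forall>i<p. \<forall>j<p. (\<lambda>\<mu>. H2_integrand T \<mu> $$ (i,j)) integrable_on (UNIV :: real set))"

definition H2_norm :: "nat \<Rightarrow> (complex \<Rightarrow> complex mat) \<Rightarrow> real" where
  "H2_norm p T = sqrt ((1 / (2 * pi)) *
     Re (mtrace (mat p p (\<lambda>(i,j). integral (UNIV :: real set) (\<lambda>\<mu>. H2_integrand T \<mu> $$ (i,j))))))"

end

theory Submission
  imports Defs "HOL-Complex_Analysis.Complex_Analysis"
begin

lemma halfplane_integral_aux:
  fixes g :: "complex \<Rightarrow> complex" and k :: complex and R0 B L :: real
  assumes holo: "g holomorphic_on {s. 0 \<le> Re s}"
    and decay: "\<And>s. 0 \<le> Re s \<Longrightarrow> R0 \<le> norm s \<Longrightarrow> norm (g s - k / s) \<le> B / (norm s)^2"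
    and B: "0 \<le> B" and L: "L \<ge> R0" "L > 0"
  shows "norm (integral {-L..L} (\<lambda>\<mu>. g (Complex 0 \<mu>)) - pi * k) \<le> B * pi / L"
    and "(\<lambda>\<mu>. g (Complex 0 \<mu>)) integrable_on {-L..L}"
proof -
  define S where "S = {s::complex. 0 \<le> Re s}"
  have convS: "convex S" unfolding S_def
    by (rule convex_halfspace_Re_ge)
  have contS: "continuous_on S g" using holo holomorphic_on_imp_continuous_on S_def by blast
  define arc where "arc = part_circlepath 0 L (-pi/2) (pi/2)"
  define line where "line = linepath (Complex 0 L) (Complex 0 (-L))"
  have arcimg: "path_image arc \<subseteq> S"
  proof
    fix z assume "z \<in> path_image arc"
    then obtain x where x: "x \<in> closed_segment (-pi/2) (pi/2)" "z = L * cis x"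
      unfolding arc_def path_image_part_circlepath' by auto
    then have "-pi/2 \<le> x" "x \<le> pi/2" by (auto simp: closed_segment_eq_real_ivl)
    then have "cos x \<ge> 0" by (intro cos_ge_zero) auto
    then show "z \<in> S" using x L by (simp add: S_def)
  qed
  have lineimg: "path_image line \<subseteq> S"
    unfolding line_def S_def path_image_linepath
    by (auto simp: closed_segment_def)
  have e1: "exp (\<i> * complex_of_real (pi/2)) = \<i>"
    using cis_conv_exp[of "pi/2"] by (simp add: complex_eq_iff)
  have e2: "exp (\<i> * complex_of_real (-pi/2)) = -\<i>"
    using cis_conv_exp[of "-pi/2"] by (simp add: complex_eq_iff)
  have ends: "pathfinish line = pathstart arc" "pathfinish arc = pathstart line"
    unfolding line_def arc_def pathstart_def pathfinish_def part_circlepath_def linepath_def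
    using e1 e2 by (auto simp: complex_eq_iff)
  have "(g has_contour_integral 0) (line +++ arc)"
    apply (rule Cauchy_theorem_convex_simple[OF holo[folded S_def] convS])
    using lineimg arcimg ends by (auto simp: line_def arc_def path_image_join)
  moreover have "g contour_integrable_on line"
    using continuous_on_subset[OF contS lineimg] unfolding line_def
    by (intro contour_integrable_continuous_linepath) simp
  then obtain J where J: "(g has_contour_integral J) line"
    by (metis has_contour_integral_integral)
  moreover have "g contour_integrable_on arc"
    using continuous_on_subset[OF contS arcimg] unfolding arc_def
    by (intro contour_integrable_continuous_part_circlepath) simp
  then obtain I where I: "(g has_contour_integral I) arc"
    by (metis has_contour_integral_integral)
  ultimately have JI: "J + I = 0"
    using has_contour_integral_join[OF J I] ends
    by (metis has_contour_integral_unique line_def valid_path_linepath arc_def valid_path_part_circlepath)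
  have "(g has_contour_integral -J) (linepath (Complex 0 (-L)) (Complex 0 L))"
    using has_contour_integral_reversepath[OF _ J] by (simp add: line_def)
  then have lineint: "((\<lambda>x. g (Complex 0 x)) has_integral (-\<i> * -J)) {-L..L}"
    by (subst (asm) has_contour_integral_linepath_same_Re_iff) (use L in auto)
  then show "(\<lambda>\<mu>. g (Complex 0 \<mu>)) integrable_on {-L..L}" by blast
  have k: "((\<lambda>s. k / s) has_contour_integral (k * \<i> * pi)) arc"
    unfolding arc_def
  proof (subst has_contour_integral_part_circlepath_iff)
    show "((\<lambda>t. k / (0 + complex_of_real L * cis t) * complex_of_real L * \<i> * cis t) has_integral
        k * \<i> * complex_of_real pi) {- pi / 2..pi / 2}"
    proof -
      have "((\<lambda>t. k * \<i>) has_integral (pi/2 - - pi/2) *\<^sub>R (k * \<i>)) {- pi / 2..pi / 2}"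
        using has_integral_const_real[of "k * \<i>" "-pi/2" "pi/2"] by simp
      then show ?thesis using L
        by (subst has_integral_cong[where g = "\<lambda>t. k * \<i>"]) (auto simp: scaleR_conv_of_real field_simps)
    qed
  qed simp
  have E: "((\<lambda>s. g s - k / s) has_contour_integral (I - k * \<i> * pi)) arc"
    by (rule has_contour_integral_diff[OF I k])
  have "norm (I - k * \<i> * pi) \<le> (B / L^2) * L * (pi/2 - -pi/2)"
  proof (rule has_contour_integral_bound_part_circlepath[OF E[unfolded arc_def]])
    show "0 \<le> B / L^2" using B by simp
    fix x assume "x \<in> path_image (part_circlepath 0 L (- pi / 2) (pi / 2))"
    then have "x \<in> S" "norm x = L" using arcimg path_image_part_circlepath_subset[of "-pi/2" "pi/2" L 0]
      unfolding arc_def using L(2) by (auto simp: sphere_def)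
    then show "norm (g x - k / x) \<le> B / L^2" using decay[of x] L by (auto simp: S_def)
  qed (use L in auto)
  also have "\<dots> = B * pi / L" using L by (simp add: power2_eq_square field_simps)
  finally have bnd: "norm (I - k * \<i> * pi) \<le> B * pi / L" .
  have "integral {-L..L} (\<lambda>\<mu>. g (Complex 0 \<mu>)) = \<i> * J" using integral_unique[OF lineint] by simp
  also have "\<dots> = - \<i> * I" using JI by (simp add: eq_neg_iff_add_eq_0[symmetric] algebra_simps)
  finally have "integral {-L..L} (\<lambda>\<mu>. g (Complex 0 \<mu>)) - pi * k = - \<i> * (I - k * \<i> * pi)"
    by (simp add: algebra_simps)
  then show "norm (integral {-L..L} (\<lambda>\<mu>. g (Complex 0 \<mu>)) - pi * k) \<le> B * pi / L"
    using bnd by (simp add: norm_mult)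
qed

definition cvn :: "complex vec \<Rightarrow> real" where
  "cvn v = L2_set (\<lambda>i. cmod (v $ i)) {0..<dim_vec v}"

definition mfn :: "complex mat \<Rightarrow> real" where
  "mfn A = L2_set (\<lambda>i. cvn (row A i)) {0..<dim_row A}"

lemma cvn_nonneg[simp]: "0 \<le> cvn v" unfolding cvn_def by simp
lemma mfn_nonneg[simp]: "0 \<le> mfn A" unfolding mfn_def by simp

lemma cvn_scalar_prod: assumes "dim_vec c = dim_vec u"
  shows "cmod (c \<bullet> u) \<le> cvn c * cvn u"
proof -
  have "cmod (c \<bullet> u) \<le> (\<Sum>i\<in>{0..<dim_vec u}. cmod (c $ i) * cmod (u $ i))"
    unfolding scalar_prod_def by (rule order_trans[OF norm_sum]) (simp add: norm_mult)
  also have "\<dots> = (\<Sum>i\<in>{0..<dim_vec u}. \<bar>cmod (c $ i)\<bar> * \<bar>cmod (u $ i)\<bar>)" by simp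
  also have "\<dots> \<le> cvn c * cvn u" unfolding cvn_def using assms by (metis L2_set_mult_ineq)
  finally show ?thesis .
qed

lemma cvn_mult_mat_vec: assumes "dim_vec u = dim_col A"
  shows "cvn (A *\<^sub>v u) \<le> mfn A * cvn u"
proof -
  have "cvn (A *\<^sub>v u) = L2_set (\<lambda>i. cmod (row A i \<bullet> u)) {0..<dim_row A}"
    unfolding cvn_def by (intro L2_set_cong) auto
  also have "\<dots> \<le> L2_set (\<lambda>i. cvn (row A i) * cvn u) {0..<dim_row A}"
    by (intro L2_set_mono cvn_scalar_prod) (use assms in auto)
  also have "\<dots> = mfn A * cvn u" unfolding mfn_def
    by (subst L2_set_left_distrib) auto
  finally show ?thesis .
qed

lemma cvn_smult: "cvn (s \<cdot>\<^sub>v u) = cmod s * cvn u"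
proof -
  have "L2_set (\<lambda>i. cmod ((s \<cdot>\<^sub>v u) $ i)) {0..<dim_vec u} = L2_set (\<lambda>i. cmod s * cmod (u $ i)) {0..<dim_vec u}"
    by (rule L2_set_cong) (auto simp: norm_mult)
  then show ?thesis unfolding cvn_def by (subst L2_set_right_distrib) auto
qed

lemma cvn_add: assumes "dim_vec u = dim_vec v" shows "cvn (u + v) \<le> cvn u + cvn v"
proof -
  have "cvn (u + v) = L2_set (\<lambda>i. cmod (u $ i + v $ i)) {0..<dim_vec v}"
    unfolding cvn_def using assms by (intro L2_set_cong) auto
  also have "\<dots> \<le> L2_set (\<lambda>i. cmod (u $ i) + cmod (v $ i)) {0..<dim_vec v}"
    by (intro L2_set_mono) (auto intro: norm_triangle_ineq)
  also have "\<dots> \<le> cvn u + cvn v" unfolding cvn_def using assms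
    by (metis L2_set_triangle_ineq)
  finally show ?thesis .
qed

lemma cvn_eq_0: assumes "cvn u = 0" shows "u = 0\<^sub>v (dim_vec u)"
  using assms unfolding cvn_def by (subst (asm) L2_set_eq_0_iff) (auto intro!: eq_vecI)

definition res :: "complex mat \<Rightarrow> complex \<Rightarrow> complex mat" where
  "res A s = minv (s \<cdot>\<^sub>m 1\<^sub>m (dim_row A) - A)"

lemma minv_props: assumes M: "M \<in> carrier_mat n n" and d: "det M \<noteq> (0::'a::field)"
  shows "minv M \<in> carrier_mat n n" "M * minv M = 1\<^sub>m n" "minv M * M = 1\<^sub>m n"
proof -
  have U: "M \<in> Units (ring_mat TYPE('a) n ())" by (rule det_non_zero_imp_unit[OF M d])
  obtain B where B: "mat_inverse M = Some B"
    using mat_inverse(1)[OF M, of "()"] U by (cases "mat_inverse M") auto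
  then have "minv M = B" unfolding minv_def by simp
  then show "minv M \<in> carrier_mat n n" "M * minv M = 1\<^sub>m n" "minv M * M = 1\<^sub>m n"
    using mat_inverse(2)[OF M B] by auto
qed

lemma minv_adj: assumes M: "M \<in> carrier_mat n n" and d: "det M \<noteq> (0::'a::field)"
  shows "minv M = (1 / det M) \<cdot>\<^sub>m adj_mat M"
proof -
  note mp = minv_props[OF M d]
  note ad = adj_mat[OF M]
  have "adj_mat M = (minv M * M) * adj_mat M" using mp ad by simp
  also have "\<dots> = minv M * (M * adj_mat M)" by (rule assoc_mult_mat) (use mp ad M in auto)
  also have "\<dots> = det M \<cdot>\<^sub>m minv M" unfolding adj_mat(2)[OF M] using mp by (subst mult_smult_distrib[of _ n n _ n]) auto
  finally show ?thesis using d mp by (auto intro!: eq_matI)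
qed

lemma det_holo:
  fixes F :: "complex \<Rightarrow> complex mat"
  assumes "\<And>s. F s \<in> carrier_mat k k"
    and "\<And>i j. i < k \<Longrightarrow> j < k \<Longrightarrow> (\<lambda>s. F s $$ (i,j)) holomorphic_on U"
  shows "(\<lambda>s. det (F s)) holomorphic_on U"
proof -
  have "(\<lambda>s. \<Sum>p \<in> {p. p permutes {0 ..< k}}. signof p * (\<Prod>i = 0 ..< k. F s $$ (i, p i)))
        holomorphic_on U"
  proof (intro holomorphic_on_sum holomorphic_on_mult holomorphic_on_const holomorphic_on_prod)
    fix p i assume "p \<in> {p. p permutes {0 ..< k}}" "i \<in> {0..<k}"
    then show "(\<lambda>s. F s $$ (i, p i)) holomorphic_on U"
      by (intro assms(2)) (auto simp: permutes_in_image)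
  qed
  then show ?thesis using det_def'[OF assms(1)] by (metis (no_types, lifting) holomorphic_transform)
qed

lemma char_entry_holo:
  assumes "A \<in> carrier_mat n n" "i < n" "j < n"
  shows "(\<lambda>s. (s \<cdot>\<^sub>m 1\<^sub>m n - A) $$ (i,j)) holomorphic_on U"
proof -
  have "(\<lambda>s. (if i = j then s else 0) - A $$ (i,j)) holomorphic_on U"
    by (cases "i = j") (auto intro!: holomorphic_intros)
  then show ?thesis by (rule holomorphic_transform) (use assms in auto)
qed

lemma adj_entry_holo:
  assumes A: "A \<in> carrier_mat n n" and ij: "i < n" "j < n"
  shows "(\<lambda>s. adj_mat (s \<cdot>\<^sub>m 1\<^sub>m n - A) $$ (i,j)) holomorphic_on U"
proof -
  obtain k where n: "n = Suc k" using ij by (cases n) auto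
  have "(\<lambda>s. (-1)^(j+i) * det (mat_delete (s \<cdot>\<^sub>m 1\<^sub>m n - A) j i)) holomorphic_on U"
  proof (intro holomorphic_on_mult holomorphic_on_const det_holo)
    fix s show "mat_delete (s \<cdot>\<^sub>m 1\<^sub>m n - A) j i \<in> carrier_mat k k"
      using mat_delete_carrier[of "s \<cdot>\<^sub>m 1\<^sub>m n - A" n n j i] A n by auto
    fix a b assume ab: "a < k" "b < k"
    have "(\<lambda>s. (s \<cdot>\<^sub>m 1\<^sub>m n - A) $$ (insert_index j a, insert_index i b)) holomorphic_on U"
      by (rule char_entry_holo[OF A]) (use ab n in \<open>auto simp: insert_index_def\<close>)
    then show "(\<lambda>s. mat_delete (s \<cdot>\<^sub>m 1\<^sub>m n - A) j i $$ (a, b)) holomorphic_on U"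
      by (rule holomorphic_transform, subst mat_delete_index[symmetric])
         (use A ab ij n in auto)
  qed
  then show ?thesis
    by (rule holomorphic_transform) (use A ij in \<open>auto simp: adj_mat_def cofactor_def\<close>)
qed

lemma res_props: assumes A: "A \<in> carrier_mat n n" and d: "det (s \<cdot>\<^sub>m 1\<^sub>m n - A) \<noteq> 0"
  shows "res A s \<in> carrier_mat n n" "(s \<cdot>\<^sub>m 1\<^sub>m n - A) * res A s = 1\<^sub>m n"
    "res A s * (s \<cdot>\<^sub>m 1\<^sub>m n - A) = 1\<^sub>m n"
proof -
  have M: "s \<cdot>\<^sub>m 1\<^sub>m n - A \<in> carrier_mat n n" using A by auto
  show "res A s \<in> carrier_mat n n" "(s \<cdot>\<^sub>m 1\<^sub>m n - A) * res A s = 1\<^sub>m n"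
    "res A s * (s \<cdot>\<^sub>m 1\<^sub>m n - A) = 1\<^sub>m n"
    using minv_props[OF M d] A unfolding res_def by auto
qed

definition rg :: "complex mat \<Rightarrow> complex vec \<Rightarrow> complex vec \<Rightarrow> complex \<Rightarrow> complex" where
  "rg A c w s = c \<bullet> (res A s *\<^sub>v w)"

lemma rg_holo:
  assumes A: "A \<in> carrier_mat n n" and c: "c \<in> carrier_vec n" and w: "w \<in> carrier_vec n"
  shows "rg A c w holomorphic_on {s. det (s \<cdot>\<^sub>m 1\<^sub>m n - A) \<noteq> 0}"
proof -
  let ?U = "{s. det (s \<cdot>\<^sub>m 1\<^sub>m n - A) \<noteq> 0}"
  have "(\<lambda>s. (\<Sum>i\<in>{0..<n}. c $ i * (\<Sum>j\<in>{0..<n}. adj_mat (s \<cdot>\<^sub>m 1\<^sub>m n - A) $$ (i,j) * w $ j))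
          / det (s \<cdot>\<^sub>m 1\<^sub>m n - A)) holomorphic_on ?U"
  proof -
    have h1: "\<And>i j. i < n \<Longrightarrow> j < n \<Longrightarrow> (\<lambda>s. adj_mat (s \<cdot>\<^sub>m 1\<^sub>m n - A) $$ (i,j)) holomorphic_on ?U"
      by (rule adj_entry_holo[OF A])
    have h2: "(\<lambda>s. det (s \<cdot>\<^sub>m 1\<^sub>m n - A)) holomorphic_on ?U"
      by (rule det_holo[where k = n]) (use A char_entry_holo[OF A] in auto)
    show ?thesis
      by (intro holomorphic_on_divide holomorphic_on_sum holomorphic_on_mult holomorphic_on_const h1 h2) auto
  qed
  then show ?thesis
  proof (rule holomorphic_transform)
    fix s assume s: "s \<in> ?U"
    have M: "s \<cdot>\<^sub>m 1\<^sub>m n - A \<in> carrier_mat n n" using A by auto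
    have r: "res A s = (1 / det (s \<cdot>\<^sub>m 1\<^sub>m n - A)) \<cdot>\<^sub>m adj_mat (s \<cdot>\<^sub>m 1\<^sub>m n - A)"
      unfolding res_def using minv_adj[OF M] s A by auto
    have aM: "adj_mat (s \<cdot>\<^sub>m 1\<^sub>m n - A) \<in> carrier_mat n n" using adj_mat[OF M] by auto
    show "(\<Sum>i = 0..<n. c $ i * (\<Sum>j = 0..<n. adj_mat (s \<cdot>\<^sub>m 1\<^sub>m n - A) $$ (i, j) * w $ j)) /
          det (s \<cdot>\<^sub>m 1\<^sub>m n - A) = rg A c w s"
      unfolding rg_def r using c w aM
      by (simp add: scalar_prod_def sum_divide_distrib sum_distrib_left mult_ac)
  qed
qed

lemma char_mult_vec: fixes A :: "complex mat" assumes A: "A \<in> carrier_mat n n" and u: "u \<in> carrier_vec n"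
  shows "(s \<cdot>\<^sub>m 1\<^sub>m n - A) *\<^sub>v u = s \<cdot>\<^sub>v u - A *\<^sub>v u"
proof (rule eq_vecI)
  fix i assume "i < dim_vec (s \<cdot>\<^sub>v u - A *\<^sub>v u)"
  then have i: "i < n" using A by auto
  have "((s \<cdot>\<^sub>m 1\<^sub>m n - A) *\<^sub>v u) $ i = (\<Sum>j\<in>{0..<n}. (s * (if i = j then 1 else 0) - A $$ (i,j)) * u $ j)"
    using A u i by (auto simp: scalar_prod_def intro!: sum.cong)
  also have "\<dots> = (\<Sum>j\<in>{0..<n}. (if i = j then s * u $ j else 0) - A $$ (i,j) * u $ j)"
    by (intro sum.cong) (auto simp: left_diff_distrib)
  also have "\<dots> = (\<Sum>j\<in>{0..<n}. (if i = j then s * u $ j else 0)) - (\<Sum>j\<in>{0..<n}. A $$ (i,j) * u $ j)"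
    by (simp add: sum_subtractf)
  also have "\<dots> = s * u $ i - (\<Sum>j\<in>{0..<n}. A $$ (i,j) * u $ j)" using i by simp
  also have "\<dots> = (s \<cdot>\<^sub>v u - A *\<^sub>v u) $ i" using A u i by (auto simp: scalar_prod_def)
  finally show "((s \<cdot>\<^sub>m 1\<^sub>m n - A) *\<^sub>v u) $ i = (s \<cdot>\<^sub>v u - A *\<^sub>v u) $ i" .
qed (use A u in auto)

lemma det_nz_large: assumes A: "A \<in> carrier_mat n n" and s: "cmod s > mfn A"
  shows "det (s \<cdot>\<^sub>m 1\<^sub>m n - A) \<noteq> 0"
proof
  assume "det (s \<cdot>\<^sub>m 1\<^sub>m n - A) = 0"
  moreover have M: "s \<cdot>\<^sub>m 1\<^sub>m n - A \<in> carrier_mat n n" using A by auto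
  ultimately obtain v where v: "v \<in> carrier_vec n" "v \<noteq> 0\<^sub>v n" "(s \<cdot>\<^sub>m 1\<^sub>m n - A) *\<^sub>v v = 0\<^sub>v n"
    using det_0_iff_vec_prod_zero_field[OF M] by auto
  then have h: "s \<cdot>\<^sub>v v - A *\<^sub>v v = 0\<^sub>v n" using char_mult_vec[OF A v(1)] by simp
  have eq: "s \<cdot>\<^sub>v v = A *\<^sub>v v"
  proof (rule eq_vecI)
    fix i assume "i < dim_vec (A *\<^sub>v v)" then have i: "i < n" using A by auto
    have "(s \<cdot>\<^sub>v v - A *\<^sub>v v) $ i = 0" using h i by simp
    then show "(s \<cdot>\<^sub>v v) $ i = (A *\<^sub>v v) $ i" using i A v by simp
  qed (use A v in auto)
  have "cmod s * cvn v \<le> mfn A * cvn v"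
  proof -
    have "cvn (s \<cdot>\<^sub>v v) = cmod s * cvn v" by (rule cvn_smult)
    moreover have "cvn (A *\<^sub>v v) \<le> mfn A * cvn v" using cvn_mult_mat_vec[of v A] A v by auto
    ultimately show ?thesis using eq by simp
  qed
  then have "(cmod s - mfn A) * cvn v \<le> 0" by (simp add: left_diff_distrib)
  then have "cvn v \<le> 0" using s by (simp add: mult_le_0_iff)
  then have "cvn v = 0" by (simp add: antisym)
  then show False using cvn_eq_0[of v] v by auto
qed

lemma res_bound:
  assumes A: "A \<in> carrier_mat n n" and w: "w \<in> carrier_vec n" and s: "cmod s \<ge> 2 * mfn A" "s \<noteq> 0"
    and d: "det (s \<cdot>\<^sub>m 1\<^sub>m n - A) \<noteq> 0"
  shows "cvn (res A s *\<^sub>v w) \<le> 2 * cvn w / cmod s"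
    and "s \<cdot>\<^sub>v (res A s *\<^sub>v w) = w + A *\<^sub>v (res A s *\<^sub>v w)"
proof -
  note rp = res_props[OF A d]
  define u where "u = res A s *\<^sub>v w"
  have u: "u \<in> carrier_vec n" unfolding u_def using rp w by auto
  have "(s \<cdot>\<^sub>m 1\<^sub>m n - A) *\<^sub>v u = w" unfolding u_def
    using rp w A by (subst assoc_mult_mat_vec[symmetric]) auto
  then have "s \<cdot>\<^sub>v u - A *\<^sub>v u = w" using char_mult_vec[OF A u] by simp
  then have h: "s \<cdot>\<^sub>v u - A *\<^sub>v u = w" .
  have equ: "s \<cdot>\<^sub>v u = w + A *\<^sub>v u"
  proof (rule eq_vecI)
    fix i assume "i < dim_vec (w + A *\<^sub>v u)" then have i: "i < n" using A w by auto
    have "(s \<cdot>\<^sub>v u - A *\<^sub>v u) $ i = w $ i" using h i by simp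
    then show "(s \<cdot>\<^sub>v u) $ i = (w + A *\<^sub>v u) $ i" using i A u w by (simp add: diff_eq_eq)
  qed (use A u w in auto)
  then show eq: "s \<cdot>\<^sub>v (res A s *\<^sub>v w) = w + A *\<^sub>v (res A s *\<^sub>v w)"
    unfolding u_def .
  have "cmod s * cvn u = cvn (w + A *\<^sub>v u)" using cvn_smult[of s u] equ by simp
  also have "\<dots> \<le> cvn w + mfn A * cvn u"
    using cvn_add[of w "A *\<^sub>v u"] cvn_mult_mat_vec[of u A] u A w by auto
  also have "\<dots> \<le> cvn w + cmod s / 2 * cvn u"
    using s by (intro add_left_mono mult_right_mono) auto
  finally have "cmod s * cvn u \<le> 2 * cvn w" by simp
  then show "cvn (res A s *\<^sub>v w) \<le> 2 * cvn w / cmod s"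
    unfolding u_def[symmetric] using s by (simp add: field_simps)
qed

lemma rg_decay:
  assumes A: "A \<in> carrier_mat n n" and c: "c \<in> carrier_vec n" and w: "w \<in> carrier_vec n"
    and s: "cmod s \<ge> 2 * mfn A" "s \<noteq> 0" and d: "det (s \<cdot>\<^sub>m 1\<^sub>m n - A) \<noteq> 0"
  shows "cmod (rg A c w s - (c \<bullet> w) / s) \<le> 2 * cvn c * mfn A * cvn w / (cmod s)^2"
proof -
  note rp = res_props[OF A d]
  define u where "u = res A s *\<^sub>v w"
  have u: "u \<in> carrier_vec n" unfolding u_def using rp w by auto
  have eq: "s \<cdot>\<^sub>v u = w + A *\<^sub>v u" and ub: "cvn u \<le> 2 * cvn w / cmod s"
    using res_bound[OF A w s d] unfolding u_def by auto
  have "u = (1/s) \<cdot>\<^sub>v w + (1/s) \<cdot>\<^sub>v (A *\<^sub>v u)"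
  proof -
    have "u = (1/s) \<cdot>\<^sub>v (s \<cdot>\<^sub>v u)" using s by (simp add: smult_smult_assoc)
    also have "\<dots> = (1/s) \<cdot>\<^sub>v w + (1/s) \<cdot>\<^sub>v (A *\<^sub>v u)" unfolding eq
      using A u w by (subst smult_add_distrib_vec) auto
    finally show ?thesis .
  qed
  then have "rg A c w s = c \<bullet> ((1/s) \<cdot>\<^sub>v w + (1/s) \<cdot>\<^sub>v (A *\<^sub>v u))"
    unfolding rg_def u_def[symmetric] by simp
  also have "\<dots> = c \<bullet> ((1/s) \<cdot>\<^sub>v w) + c \<bullet> ((1/s) \<cdot>\<^sub>v (A *\<^sub>v u))"
    by (rule scalar_prod_add_distrib[of _ n]) (use c w A u in auto)
  finally have "rg A c w s = c \<bullet> ((1/s) \<cdot>\<^sub>v w) + c \<bullet> ((1/s) \<cdot>\<^sub>v (A *\<^sub>v u))" .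
  then have "rg A c w s - (c \<bullet> w) / s = (1/s) * (c \<bullet> (A *\<^sub>v u))"
    using c w A u by simp
  then have "cmod (rg A c w s - (c \<bullet> w) / s) = (1 / cmod s) * cmod (c \<bullet> (A *\<^sub>v u))"
    by (simp add: norm_mult norm_divide)
  also have "\<dots> \<le> (1 / cmod s) * (cvn c * (mfn A * cvn u))"
  proof -
    have h1: "cmod (c \<bullet> (A *\<^sub>v u)) \<le> cvn c * cvn (A *\<^sub>v u)" using cvn_scalar_prod[of c "A *\<^sub>v u"] c u A by auto
    have h2: "cvn (A *\<^sub>v u) \<le> mfn A * cvn u" using cvn_mult_mat_vec[of u A] u A by auto
    from h1 h2 have "cmod (c \<bullet> (A *\<^sub>v u)) \<le> cvn c * (mfn A * cvn u)"
      by (meson cvn_nonneg mult_left_mono order_trans)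
    then show ?thesis by (intro mult_left_mono) auto
  qed
  also have "\<dots> \<le> (1 / cmod s) * (cvn c * (mfn A * (2 * cvn w / cmod s)))"
    using ub by (intro mult_left_mono) auto
  also have "\<dots> = 2 * cvn c * mfn A * cvn w / (cmod s)^2"
    by (simp add: power2_eq_square)
  finally show ?thesis .
qed

lemma rg_integral:
  assumes A: "A \<in> carrier_mat n n" and c: "c \<in> carrier_vec n" and w: "w \<in> carrier_vec n"
    and nz: "\<And>s. 0 \<le> Re s \<Longrightarrow> det (s \<cdot>\<^sub>m 1\<^sub>m n - A) \<noteq> 0"
  shows "((\<lambda>L. integral {-L..L} (\<lambda>\<mu>. rg A c w (Complex 0 \<mu>))) \<longlongrightarrow> pi * (c \<bullet> w)) at_top"
    and "(\<lambda>\<mu>. rg A c w (Complex 0 \<mu>)) integrable_on {-L..L}"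
proof -
  define R0 where "R0 = max (2 * mfn A) 1"
  define B where "B = 2 * cvn c * mfn A * cvn w"
  have B0: "0 \<le> B" unfolding B_def by simp
  have holo: "rg A c w holomorphic_on {s. 0 \<le> Re s}"
    by (rule holomorphic_on_subset[OF rg_holo[OF A c w]]) (use nz in auto)
  have decay: "cmod (rg A c w s - (c \<bullet> w) / s) \<le> B / (cmod s)^2"
    if "0 \<le> Re s" "R0 \<le> cmod s" for s
  proof -
    have "s \<noteq> 0" using that unfolding R0_def by auto
    moreover have "2 * mfn A \<le> cmod s" using that unfolding R0_def by auto
    ultimately show ?thesis unfolding B_def
      using rg_decay[OF A c w, of s] nz[OF that(1)] by auto
  qed
  have aux: "norm (integral {-L..L} (\<lambda>\<mu>. rg A c w (Complex 0 \<mu>)) - pi * (c \<bullet> w)) \<le> B * pi / L"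
    "(\<lambda>\<mu>. rg A c w (Complex 0 \<mu>)) integrable_on {-L..L}"
    if "L \<ge> R0" for L
    using halfplane_integral_aux[OF holo decay B0, of L] that by (auto simp: R0_def)
  have "((\<lambda>L. integral {-L..L} (\<lambda>\<mu>. rg A c w (Complex 0 \<mu>)) - pi * (c \<bullet> w)) \<longlongrightarrow> 0) at_top"
  proof (rule Lim_null_comparison)
    show "\<forall>\<^sub>F L in at_top. norm (integral {-L..L} (\<lambda>\<mu>. rg A c w (Complex 0 \<mu>)) - pi * (c \<bullet> w)) \<le> B * pi / L"
      using eventually_ge_at_top[of R0] by eventually_elim (use aux in auto)
    show "((\<lambda>L. B * pi / L) \<longlongrightarrow> 0) at_top"
      by (intro tendsto_divide_0[OF tendsto_const] filterlim_at_top_imp_at_infinity filterlim_ident)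
  qed
  then show "((\<lambda>L. integral {-L..L} (\<lambda>\<mu>. rg A c w (Complex 0 \<mu>))) \<longlongrightarrow> pi * (c \<bullet> w)) at_top"
    by (rule LIM_zero_cancel)
  show "(\<lambda>\<mu>. rg A c w (Complex 0 \<mu>)) integrable_on {-L..L}"
  proof (cases "L \<ge> R0")
    case True then show ?thesis using aux by auto
  next
    case False
    then have "{-L..L} \<subseteq> {-R0..R0}" by auto
    then show ?thesis using aux(2)[of R0] integrable_on_subinterval by (metis box_real(2) order_refl)
  qed
qed

lemma hcat_carrier[simp]: "X \<in> carrier_mat r c1 \<Longrightarrow> Y \<in> carrier_mat r c2 \<Longrightarrow> hcat X Y \<in> carrier_mat r (c1 + c2)"
  unfolding hcat_def using four_block_carrier_mat[of X r c1 "0\<^sub>m 0 c2" 0 c2 Y "0\<^sub>m 0 c1"] by auto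

lemma vcat_carrier[simp]: "X \<in> carrier_mat r1 c \<Longrightarrow> Y \<in> carrier_mat r2 c \<Longrightarrow> vcat X Y \<in> carrier_mat (r1 + r2) c"
  unfolding vcat_def by auto

lemma hcat_mult_vec:
  fixes X Y :: "'a::comm_ring_1 mat"
  assumes X: "X \<in> carrier_mat r c1" and Y: "Y \<in> carrier_mat r c2"
    and a: "a \<in> carrier_vec c1" and b: "b \<in> carrier_vec c2"
  shows "hcat X Y *\<^sub>v (a @\<^sub>v b) = X *\<^sub>v a + Y *\<^sub>v b"
proof -
  have "hcat X Y *\<^sub>v (a @\<^sub>v b) = (X *\<^sub>v a + Y *\<^sub>v b) @\<^sub>v (0\<^sub>m 0 c1 *\<^sub>v a + 0\<^sub>m 0 c2 *\<^sub>v b)"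
  proof -
    have cX: "dim_col X = c1" "dim_col Y = c2" using X Y by auto
    show ?thesis unfolding hcat_def cX by (rule four_block_mat_mult_vec) (use assms in auto)
  qed
  also have "\<dots> = X *\<^sub>v a + Y *\<^sub>v b" by (intro eq_vecI) (use assms in auto)
  finally show ?thesis .
qed

lemma vcat_mult_vec:
  fixes X Y :: "'a::comm_ring_1 mat"
  assumes X: "X \<in> carrier_mat r1 c" and Y: "Y \<in> carrier_mat r2 c" and v: "v \<in> carrier_vec c"
  shows "vcat X Y *\<^sub>v v = (X *\<^sub>v v) @\<^sub>v (Y *\<^sub>v v)"
proof -
  have vv: "v = v @\<^sub>v 0\<^sub>v 0" by (intro eq_vecI) (use v in auto)
  have "vcat X Y *\<^sub>v (v @\<^sub>v 0\<^sub>v 0) = (X *\<^sub>v v + 0\<^sub>m r1 0 *\<^sub>v 0\<^sub>v 0) @\<^sub>v (Y *\<^sub>v v + 0\<^sub>m r2 0 *\<^sub>v 0\<^sub>v 0)"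
    unfolding vcat_def append_rows_def using X Y v
    by (subst four_block_mat_mult_vec[of _ r1 c _ 0 _ r2]) auto
  also have "\<dots> = (X *\<^sub>v v) @\<^sub>v (Y *\<^sub>v v)" using X Y v by auto
  finally show ?thesis using vv by metis
qed

lemma smult_mat_mult_vec:
  fixes A :: "'a::comm_ring_1 mat"
  assumes "A \<in> carrier_mat nr nc" "v \<in> carrier_vec nc"
  shows "(k \<cdot>\<^sub>m A) *\<^sub>v v = k \<cdot>\<^sub>v (A *\<^sub>v v)"
  by (intro eq_vecI) (use assms in \<open>auto simp: scalar_prod_def sum_distrib_left mult.assoc\<close>)

lemma sum_delta_mult:
  fixes c :: "'a::comm_ring_1" and i m :: nat
  assumes "i < m"
  shows "(\<Sum>ia = 0..<m. c * (if ia = i then 1 else 0) * f ia) = c * f i"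
proof -
  have "(\<Sum>ia = 0..<m. c * (if ia = i then 1 else 0) * f ia) = (\<Sum>ia = 0..<m. if ia = i then c * f ia else 0)"
    by (intro sum.cong) auto
  then show ?thesis using assms by (simp add: sum.delta)
qed

lemma scalar_prod_transpose:
  fixes A :: "'a::comm_ring_1 mat"
  assumes "A \<in> carrier_mat nr nc" "x \<in> carrier_vec nc" "y \<in> carrier_vec nr"
  shows "y \<bullet> (A *\<^sub>v x) = (transpose_mat A *\<^sub>v y) \<bullet> x"
  using transpose_vec_mult_scalar[OF assms] by simp

lemma block3_form:
  fixes X Q R :: "real mat" and \<gamma> :: real
  assumes X: "X \<in> carrier_mat nz nz" and Q: "Q \<in> carrier_mat nz m" and R: "R \<in> carrier_mat nz m"
    and a: "a \<in> carrier_vec nz" and y: "y \<in> carrier_vec m" and w: "w \<in> carrier_vec m"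
  defines "L \<equiv> vcat (hcat X (hcat Q (- R)))
                   (vcat (hcat (transpose_mat Q) (hcat (- \<gamma> \<cdot>\<^sub>m 1\<^sub>m m) (0\<^sub>m m m)))
                         (hcat (transpose_mat (- R)) (hcat (0\<^sub>m m m) (- \<gamma> \<cdot>\<^sub>m 1\<^sub>m m))))"
  shows "(a @\<^sub>v (y @\<^sub>v w)) \<bullet> (L *\<^sub>v (a @\<^sub>v (y @\<^sub>v w))) =
     a \<bullet> (X *\<^sub>v a) + 2 * ((transpose_mat Q *\<^sub>v a) \<bullet> y) - 2 * ((transpose_mat R *\<^sub>v a) \<bullet> w)
     - \<gamma> * (y \<bullet> y) - \<gamma> * (w \<bullet> w)"
proof -
  have mR: "- R \<in> carrier_mat nz m" using R by auto
  have QT: "transpose_mat Q \<in> carrier_mat m nz" and RT: "transpose_mat (- R) \<in> carrier_mat m nz"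
    using Q R by auto
  have g: "- \<gamma> \<cdot>\<^sub>m 1\<^sub>m m \<in> carrier_mat m m" by auto
  have z: "0\<^sub>m m m \<in> carrier_mat m m" by auto
  have yw: "y @\<^sub>v w \<in> carrier_vec (m + m)" using y w by auto
  have v: "a @\<^sub>v (y @\<^sub>v w) \<in> carrier_vec (nz + (m + m))" using a yw by auto
  have "L *\<^sub>v (a @\<^sub>v (y @\<^sub>v w)) =
     (X *\<^sub>v a + (Q *\<^sub>v y + (- R) *\<^sub>v w)) @\<^sub>v
     ((transpose_mat Q *\<^sub>v a + ((- \<gamma> \<cdot>\<^sub>m 1\<^sub>m m) *\<^sub>v y + 0\<^sub>m m m *\<^sub>v w)) @\<^sub>v
      (transpose_mat (- R) *\<^sub>v a + (0\<^sub>m m m *\<^sub>v y + (- \<gamma> \<cdot>\<^sub>m 1\<^sub>m m) *\<^sub>v w)))"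
    unfolding L_def
    apply (subst vcat_mult_vec[OF hcat_carrier[OF X hcat_carrier[OF Q mR]] vcat_carrier[OF hcat_carrier[OF QT hcat_carrier[OF g z]] hcat_carrier[OF RT hcat_carrier[OF z g]]] v])
    apply (subst vcat_mult_vec[OF hcat_carrier[OF QT hcat_carrier[OF g z]] hcat_carrier[OF RT hcat_carrier[OF z g]] v])
    apply (subst hcat_mult_vec[OF X hcat_carrier[OF Q mR] a yw])
    apply (subst hcat_mult_vec[OF QT hcat_carrier[OF g z] a yw])
    apply (subst hcat_mult_vec[OF RT hcat_carrier[OF z g] a yw])
    apply (subst hcat_mult_vec[OF Q mR y w])
    apply (subst hcat_mult_vec[OF g z y w])
    apply (subst hcat_mult_vec[OF z g y w])
    by simp
  also have "(a @\<^sub>v (y @\<^sub>v w)) \<bullet> \<dots> =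
     a \<bullet> (X *\<^sub>v a + (Q *\<^sub>v y + (- R) *\<^sub>v w)) +
     (y \<bullet> (transpose_mat Q *\<^sub>v a + ((- \<gamma> \<cdot>\<^sub>m 1\<^sub>m m) *\<^sub>v y + 0\<^sub>m m m *\<^sub>v w)) +
      w \<bullet> (transpose_mat (- R) *\<^sub>v a + (0\<^sub>m m m *\<^sub>v y + (- \<gamma> \<cdot>\<^sub>m 1\<^sub>m m) *\<^sub>v w)))"
  proof -
    have U1: "X *\<^sub>v a + (Q *\<^sub>v y + (- R) *\<^sub>v w) \<in> carrier_vec nz" using X Q mR a y w by (metis add_carrier_vec mult_mat_vec_carrier)
    have U2: "transpose_mat Q *\<^sub>v a + ((- \<gamma> \<cdot>\<^sub>m 1\<^sub>m m) *\<^sub>v y + 0\<^sub>m m m *\<^sub>v w) \<in> carrier_vec m"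
      using QT g z a y w by (metis add_carrier_vec mult_mat_vec_carrier)
    have U3: "transpose_mat (- R) *\<^sub>v a + (0\<^sub>m m m *\<^sub>v y + (- \<gamma> \<cdot>\<^sub>m 1\<^sub>m m) *\<^sub>v w) \<in> carrier_vec m"
      using RT g z a y w by (metis add_carrier_vec mult_mat_vec_carrier)
    show ?thesis
      by (simp only: scalar_prod_append[OF a yw U1 append_carrier_vec[OF U2 U3]] scalar_prod_append[OF y w U2 U3])
  qed
  also have "\<dots> = a \<bullet> (X *\<^sub>v a) + (transpose_mat Q *\<^sub>v a) \<bullet> y - (transpose_mat R *\<^sub>v a) \<bullet> w
       + (y \<bullet> (transpose_mat Q *\<^sub>v a) - \<gamma> * (y \<bullet> y)) + (- (w \<bullet> (transpose_mat R *\<^sub>v a)) - \<gamma> * (w \<bullet> w))"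
  proof -
    have e1: "a \<bullet> (X *\<^sub>v a + (Q *\<^sub>v y + (- R) *\<^sub>v w)) = a \<bullet> (X *\<^sub>v a) + (transpose_mat Q *\<^sub>v a) \<bullet> y - (transpose_mat R *\<^sub>v a) \<bullet> w"
      using X Q R a y w
      by (simp add: scalar_prod_add_distrib[of _ nz] scalar_prod_transpose[of Q nz m] scalar_prod_transpose[of R nz m])
    have v2: "transpose_mat Q *\<^sub>v a + ((- \<gamma> \<cdot>\<^sub>m 1\<^sub>m m) *\<^sub>v y + 0\<^sub>m m m *\<^sub>v w) = transpose_mat Q *\<^sub>v a + (- \<gamma>) \<cdot>\<^sub>v y"
      by (intro eq_vecI) (use Q a y w in \<open>auto simp: scalar_prod_def sum_negf sum_delta_mult\<close>)
    have e2: "y \<bullet> (transpose_mat Q *\<^sub>v a + ((- \<gamma> \<cdot>\<^sub>m 1\<^sub>m m) *\<^sub>v y + 0\<^sub>m m m *\<^sub>v w)) = y \<bullet> (transpose_mat Q *\<^sub>v a) - \<gamma> * (y \<bullet> y)"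
      unfolding v2 using Q a y by (subst scalar_prod_add_distrib[of y m]) auto
    have v3: "transpose_mat (- R) *\<^sub>v a + (0\<^sub>m m m *\<^sub>v y + (- \<gamma> \<cdot>\<^sub>m 1\<^sub>m m) *\<^sub>v w) = - (transpose_mat R *\<^sub>v a) + (- \<gamma>) \<cdot>\<^sub>v w"
      by (intro eq_vecI) (use R a y w in \<open>auto simp: scalar_prod_def sum_negf sum_delta_mult\<close>)
    have e3: "w \<bullet> (transpose_mat (- R) *\<^sub>v a + (0\<^sub>m m m *\<^sub>v y + (- \<gamma> \<cdot>\<^sub>m 1\<^sub>m m) *\<^sub>v w)) = - (w \<bullet> (transpose_mat R *\<^sub>v a)) - \<gamma> * (w \<bullet> w)"
      unfolding v3 using R a w by (subst scalar_prod_add_distrib[of w m]) auto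
    show ?thesis unfolding e1 e2 e3 by simp
  qed
  also have "\<dots> = a \<bullet> (X *\<^sub>v a) + 2 * ((transpose_mat Q *\<^sub>v a) \<bullet> y) - 2 * ((transpose_mat R *\<^sub>v a) \<bullet> w)
     - \<gamma> * (y \<bullet> y) - \<gamma> * (w \<bullet> w)"
    using comm_scalar_prod[of y m "transpose_mat Q *\<^sub>v a"] comm_scalar_prod[of w m "transpose_mat R *\<^sub>v a"]
      Q R a y w by simp
  finally show ?thesis .
qed

lemma block2_form:
  fixes P B Z :: "real mat"
  assumes P: "P \<in> carrier_mat nz nz" and B: "B \<in> carrier_mat p nz" and Z: "Z \<in> carrier_mat p p"
    and x: "x \<in> carrier_vec nz" and y: "y \<in> carrier_vec p"
  shows "(x @\<^sub>v y) \<bullet> (vcat (hcat P (transpose_mat B)) (hcat B Z) *\<^sub>v (x @\<^sub>v y)) =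
    x \<bullet> (P *\<^sub>v x) + 2 * ((B *\<^sub>v x) \<bullet> y) + y \<bullet> (Z *\<^sub>v y)"
proof -
  have BT: "transpose_mat B \<in> carrier_mat nz p" using B by auto
  have xy: "x @\<^sub>v y \<in> carrier_vec (nz + p)" using x y by auto
  have "vcat (hcat P (transpose_mat B)) (hcat B Z) *\<^sub>v (x @\<^sub>v y) =
      (P *\<^sub>v x + transpose_mat B *\<^sub>v y) @\<^sub>v (B *\<^sub>v x + Z *\<^sub>v y)"
    by (simp only: vcat_mult_vec[OF hcat_carrier[OF P BT] hcat_carrier[OF B Z] xy]
        hcat_mult_vec[OF P BT x y] hcat_mult_vec[OF B Z x y])
  moreover have U1: "P *\<^sub>v x + transpose_mat B *\<^sub>v y \<in> carrier_vec nz" using P BT x y by (metis add_carrier_vec mult_mat_vec_carrier)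
  moreover have U2: "B *\<^sub>v x + Z *\<^sub>v y \<in> carrier_vec p" using B Z x y by (metis add_carrier_vec mult_mat_vec_carrier)
  ultimately have "(x @\<^sub>v y) \<bullet> (vcat (hcat P (transpose_mat B)) (hcat B Z) *\<^sub>v (x @\<^sub>v y)) =
     x \<bullet> (P *\<^sub>v x + transpose_mat B *\<^sub>v y) + y \<bullet> (B *\<^sub>v x + Z *\<^sub>v y)"
    using scalar_prod_append[OF x y U1 U2] by simp
  also have "\<dots> = x \<bullet> (P *\<^sub>v x) + x \<bullet> (transpose_mat B *\<^sub>v y) + (y \<bullet> (B *\<^sub>v x) + y \<bullet> (Z *\<^sub>v y))"
    using P B Z x y BT by (simp add: scalar_prod_add_distrib[of _ nz] scalar_prod_add_distrib[of _ p])
  also have "x \<bullet> (transpose_mat B *\<^sub>v y) = (B *\<^sub>v x) \<bullet> y"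
    using scalar_prod_transpose[OF BT y x] by simp
  also have "y \<bullet> (B *\<^sub>v x) = (B *\<^sub>v x) \<bullet> y"
    using comm_scalar_prod[of y p "B *\<^sub>v x"] B x y by auto
  finally show ?thesis by simp
qed

lemma neg_def_form:
  assumes "neg_def L k" "v \<in> carrier_vec k"
  shows "v \<bullet> (L *\<^sub>v v) \<le> 0" "v \<noteq> 0\<^sub>v k \<Longrightarrow> v \<bullet> (L *\<^sub>v v) < 0"
proof -
  have L: "L \<in> carrier_mat k k" using assms unfolding neg_def_def pos_def_def symmetric_mat_def by auto
  have *: "v \<bullet> ((- L) *\<^sub>v v) = - (v \<bullet> (L *\<^sub>v v))" using L assms(2) by auto
  show "v \<noteq> 0\<^sub>v k \<Longrightarrow> v \<bullet> (L *\<^sub>v v) < 0" using assms * unfolding neg_def_def pos_def_def by force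
  show "v \<bullet> (L *\<^sub>v v) \<le> 0"
  proof (cases "v = 0\<^sub>v k")
    case True then show ?thesis using L by simp
  next
    case False then show ?thesis using assms * unfolding neg_def_def pos_def_def by force
  qed
qed

lemma pos_def_form:
  assumes "pos_def L k" "v \<in> carrier_vec k"
  shows "v \<bullet> (L *\<^sub>v v) \<ge> 0" "v \<noteq> 0\<^sub>v k \<Longrightarrow> v \<bullet> (L *\<^sub>v v) > 0"
proof -
  have L: "L \<in> carrier_mat k k" using assms unfolding pos_def_def symmetric_mat_def by auto
  show "v \<noteq> 0\<^sub>v k \<Longrightarrow> v \<bullet> (L *\<^sub>v v) > 0" using assms unfolding pos_def_def by force
  show "v \<bullet> (L *\<^sub>v v) \<ge> 0"
  proof (cases "v = 0\<^sub>v k")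
    case True then show ?thesis using L by simp
  next
    case False then show ?thesis using assms unfolding pos_def_def by force
  qed
qed

lemma lmi1_conseq:
  fixes X Q R :: "real mat" and \<gamma> :: real
  assumes X: "X \<in> carrier_mat nz nz" and Q: "Q \<in> carrier_mat nz m" and R: "R \<in> carrier_mat nz m"
    and g: "\<gamma> > 0" and a: "a \<in> carrier_vec nz"
    and nd: "neg_def (vcat (hcat X (hcat Q (- R)))
                   (vcat (hcat (transpose_mat Q) (hcat (- \<gamma> \<cdot>\<^sub>m 1\<^sub>m m) (0\<^sub>m m m)))
                         (hcat (transpose_mat (- R)) (hcat (0\<^sub>m m m) (- \<gamma> \<cdot>\<^sub>m 1\<^sub>m m)))))
                   (nz + 2 * m)"
  shows "a \<bullet> (X *\<^sub>v a) + ((transpose_mat Q *\<^sub>v a) \<bullet> (transpose_mat Q *\<^sub>v a) + (transpose_mat R *\<^sub>v a) \<bullet> (transpose_mat R *\<^sub>v a)) / \<gamma> \<le> 0"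
    and "a \<noteq> 0\<^sub>v nz \<Longrightarrow> a \<bullet> (X *\<^sub>v a) < 0"
proof -
  have k: "nz + 2 * m = nz + (m + m)" by simp
  note nd' = nd[unfolded k]
  define qa where "qa = transpose_mat Q *\<^sub>v a"
  define ra where "ra = transpose_mat R *\<^sub>v a"
  have qa: "qa \<in> carrier_vec m" and ra: "ra \<in> carrier_vec m" unfolding qa_def ra_def using Q R a by auto
  define y where "y = (1/\<gamma>) \<cdot>\<^sub>v qa"
  define w where "w = (- (1/\<gamma>)) \<cdot>\<^sub>v ra"
  have y: "y \<in> carrier_vec m" and w: "w \<in> carrier_vec m" unfolding y_def w_def using qa ra by auto
  have v: "a @\<^sub>v (y @\<^sub>v w) \<in> carrier_vec (nz + (m + m))" using a y w by auto
  from neg_def_form(1)[OF nd' v] have "a \<bullet> (X *\<^sub>v a) + 2 * (qa \<bullet> y) - 2 * (ra \<bullet> w) - \<gamma> * (y \<bullet> y) - \<gamma> * (w \<bullet> w) \<le> 0"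
    unfolding block3_form[OF X Q R a y w] qa_def ra_def .
  moreover have "2 * (qa \<bullet> y) - 2 * (ra \<bullet> w) - \<gamma> * (y \<bullet> y) - \<gamma> * (w \<bullet> w) = (qa \<bullet> qa + ra \<bullet> ra) / \<gamma>"
    unfolding y_def w_def using qa ra g by (simp add: field_simps power2_eq_square)
  ultimately show "a \<bullet> (X *\<^sub>v a) + ((transpose_mat Q *\<^sub>v a) \<bullet> (transpose_mat Q *\<^sub>v a) + (transpose_mat R *\<^sub>v a) \<bullet> (transpose_mat R *\<^sub>v a)) / \<gamma> \<le> 0"
    unfolding qa_def ra_def by linarith
  assume a0: "a \<noteq> 0\<^sub>v nz"
  have z: "0\<^sub>v m \<in> carrier_vec m" by simp
  have v0: "a @\<^sub>v (0\<^sub>v m @\<^sub>v 0\<^sub>v m) \<in> carrier_vec (nz + (m + m))" using a by auto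
  have "a @\<^sub>v (0\<^sub>v m @\<^sub>v 0\<^sub>v m) \<noteq> 0\<^sub>v (nz + (m + m))"
  proof
    assume h: "a @\<^sub>v (0\<^sub>v m @\<^sub>v 0\<^sub>v m) = 0\<^sub>v (nz + (m + m))"
    have "a = 0\<^sub>v nz"
    proof (rule eq_vecI)
      fix i assume "i < dim_vec (0\<^sub>v nz :: real vec)"
      then have i: "i < nz" by simp
      have "(a @\<^sub>v (0\<^sub>v m @\<^sub>v 0\<^sub>v m)) $ i = 0" using h i by simp
      then show "a $ i = 0\<^sub>v nz $ i" using i a by simp
    qed (use a in simp)
    then show False using a0 by simp
  qed
  from neg_def_form(2)[OF nd' v0 this]
  show "a \<bullet> (X *\<^sub>v a) < 0"
    unfolding block3_form[OF X Q R a z z] using Q R a by simp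
qed

lemma lmi2_conseq:
  fixes P B Z V :: "real mat"
  assumes P: "P \<in> carrier_mat nz nz" and B: "B \<in> carrier_mat p nz" and Z: "Z \<in> carrier_mat p p"
    and V: "V \<in> carrier_mat nz nz" and PV: "P * V = 1\<^sub>m nz"
    and pd: "pos_def (vcat (hcat P (transpose_mat B)) (hcat B Z)) (nz + p)"
    and y: "y \<in> carrier_vec p"
  shows "(transpose_mat B *\<^sub>v y) \<bullet> (V *\<^sub>v (transpose_mat B *\<^sub>v y)) \<le> y \<bullet> (Z *\<^sub>v y)"
proof -
  define z where "z = transpose_mat B *\<^sub>v y"
  have z: "z \<in> carrier_vec nz" unfolding z_def using B y by auto
  define x where "x = - (V *\<^sub>v z)"
  have x: "x \<in> carrier_vec nz" unfolding x_def using V z by auto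
  have "P *\<^sub>v (V *\<^sub>v z) = z" using assoc_mult_mat_vec[of P nz nz V nz z] PV P V z by simp
  moreover have "P *\<^sub>v (- (V *\<^sub>v z)) = - (P *\<^sub>v (V *\<^sub>v z))" by (intro eq_vecI) (use P V z in auto)
  ultimately have Px: "P *\<^sub>v x = - z" unfolding x_def by simp
  have "0 \<le> (x @\<^sub>v y) \<bullet> (vcat (hcat P (transpose_mat B)) (hcat B Z) *\<^sub>v (x @\<^sub>v y))"
    using pos_def_form(1)[OF pd] x y by auto
  also have "\<dots> = x \<bullet> (P *\<^sub>v x) + 2 * ((B *\<^sub>v x) \<bullet> y) + y \<bullet> (Z *\<^sub>v y)"
    by (rule block2_form[OF P B Z x y])
  also have "(B *\<^sub>v x) \<bullet> y = x \<bullet> z"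
    unfolding z_def using scalar_prod_transpose[OF B x y] comm_scalar_prod[of y p "B *\<^sub>v x"]
      comm_scalar_prod[of x nz "transpose_mat B *\<^sub>v y"] B x y by auto
  also have "x \<bullet> (P *\<^sub>v x) = - (x \<bullet> z)" unfolding Px using x z by simp
  also have "x \<bullet> z = - (z \<bullet> (V *\<^sub>v z))" unfolding x_def using V z
    by (simp add: comm_scalar_prod[of "V *\<^sub>v z" nz z])
  finally show ?thesis unfolding z_def by simp
qed

lemma sum_split_mm: "(\<Sum>k<(m::nat)+m. f k) = (\<Sum>k<m. f k) + (\<Sum>k<m. f (m + k)::'a::comm_monoid_add)"
proof -
  have "(\<Sum>k<m+m. f k) = (\<Sum>k=0..<m. f k) + (\<Sum>k=m..<m+m. f k)"
    by (simp add: lessThan_atLeast0 sum.atLeastLessThan_concat)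
  also have "(\<Sum>k=m..<m+m. f k) = (\<Sum>k=0..<m. f (k + m))"
    using sum.shift_bounds_nat_ivl[of f 0 m m] by simp
  finally show ?thesis by (simp add: lessThan_atLeast0 add.commute)
qed

definition cv :: "real vec \<Rightarrow> complex vec" where "cv v = map_vec complex_of_real v"
definition rev :: "complex vec \<Rightarrow> real vec" where "rev v = map_vec Re v"
definition imv :: "complex vec \<Rightarrow> real vec" where "imv v = map_vec Im v"

lemma cv_carrier[simp]: "cv v \<in> carrier_vec n \<longleftrightarrow> v \<in> carrier_vec n"
  and rev_carrier[simp]: "rev u \<in> carrier_vec n \<longleftrightarrow> u \<in> carrier_vec n"
  and imv_carrier[simp]: "imv u \<in> carrier_vec n \<longleftrightarrow> u \<in> carrier_vec n"
  unfolding cv_def rev_def imv_def carrier_vec_def by auto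

lemma cv_dim[simp]: "dim_vec (cv v) = dim_vec v" and rev_dim[simp]: "dim_vec (rev u) = dim_vec u"
  and imv_dim[simp]: "dim_vec (imv u) = dim_vec u"
  unfolding cv_def rev_def imv_def by auto

lemma cmat_carrier[simp]: "cmat M \<in> carrier_mat r c \<longleftrightarrow> M \<in> carrier_mat r c"
  unfolding cmat_def by simp

lemma Re_cmat_mult_vec: assumes "M \<in> carrier_mat r c" "u \<in> carrier_vec c" "i < r"
  shows "Re ((cmat M *\<^sub>v u) $ i) = (M *\<^sub>v rev u) $ i"
    and "Im ((cmat M *\<^sub>v u) $ i) = (M *\<^sub>v imv u) $ i"
  using assms by (auto simp: cmat_def rev_def imv_def scalar_prod_def)

lemma Re_scalar_cv: assumes "u \<in> carrier_vec n" "v \<in> carrier_vec n"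
  shows "Re (u \<bullet> cv v) = rev u \<bullet> v" and "Im (u \<bullet> cv v) = imv u \<bullet> v"
  using assms by (auto simp: cv_def rev_def imv_def scalar_prod_def)

lemma scalar_prod_minus_right: assumes "(v::'a::comm_ring vec) \<in> carrier_vec n" "w1 \<in> carrier_vec n" "w2 \<in> carrier_vec n"
  shows "scalar_prod v (w1 - w2) = scalar_prod v w1 - scalar_prod v w2"
  using assms by (auto simp: scalar_prod_def sum_subtractf algebra_simps)

lemma qf_X:
  fixes N P X :: "real mat"
  assumes N: "N \<in> carrier_mat nz nz" and P: "P \<in> carrier_mat nz nz" and Ps: "transpose_mat P = P"
    and X: "X = transpose_mat N * P + P * N" and x: "x \<in> carrier_vec nz"
  shows "x \<bullet> (X *\<^sub>v x) = 2 * ((P *\<^sub>v x) \<bullet> (N *\<^sub>v x))"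
proof -
  have "X *\<^sub>v x = transpose_mat N *\<^sub>v (P *\<^sub>v x) + P *\<^sub>v (N *\<^sub>v x)"
    unfolding X using N P x by (simp add: add_mult_distrib_mat_vec[of _ nz nz])
  then have "x \<bullet> (X *\<^sub>v x) = x \<bullet> (transpose_mat N *\<^sub>v (P *\<^sub>v x)) + x \<bullet> (P *\<^sub>v (N *\<^sub>v x))"
    using N P x by (simp add: scalar_prod_add_distrib[of _ nz])
  also have "x \<bullet> (transpose_mat N *\<^sub>v (P *\<^sub>v x)) = (N *\<^sub>v x) \<bullet> (P *\<^sub>v x)"
    using scalar_prod_transpose[of "transpose_mat N" nz nz "P *\<^sub>v x" x] N P x by simp
  also have "x \<bullet> (P *\<^sub>v (N *\<^sub>v x)) = (P *\<^sub>v x) \<bullet> (N *\<^sub>v x)"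
    using scalar_prod_transpose[of P nz nz "N *\<^sub>v x" x] N P x Ps by simp
  finally show ?thesis using comm_scalar_prod[of "N *\<^sub>v x" nz "P *\<^sub>v x"] N P x by simp
qed

lemma sym_form: assumes A: "(A::real mat) \<in> carrier_mat n n" and As: "transpose_mat A = A"
  and x: "x \<in> carrier_vec n" and y: "y \<in> carrier_vec n"
  shows "x \<bullet> (A *\<^sub>v y) = y \<bullet> (A *\<^sub>v x)"
  using scalar_prod_transpose[OF A y x] As comm_scalar_prod[of "A *\<^sub>v x" n y] A x y by simp

lemma eigen_free:
  fixes N P X :: "real mat" and s :: complex
  assumes N: "N \<in> carrier_mat nz nz" and P: "P \<in> carrier_mat nz nz" and Ps: "transpose_mat P = P"
    and X: "X = transpose_mat N * P + P * N"
    and Pp: "\<And>x. x \<in> carrier_vec nz \<Longrightarrow> 0 \<le> x \<bullet> (P *\<^sub>v x)"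
    and Xn: "\<And>x. x \<in> carrier_vec nz \<Longrightarrow> x \<noteq> 0\<^sub>v nz \<Longrightarrow> x \<bullet> (X *\<^sub>v x) < 0"
    and s: "0 \<le> Re s"
  shows "det (s \<cdot>\<^sub>m 1\<^sub>m nz - cmat N) \<noteq> 0"
proof
  assume "det (s \<cdot>\<^sub>m 1\<^sub>m nz - cmat N) = 0"
  moreover have M: "s \<cdot>\<^sub>m 1\<^sub>m nz - cmat N \<in> carrier_mat nz nz" using N by auto
  ultimately obtain u where u: "u \<in> carrier_vec nz" "u \<noteq> 0\<^sub>v nz" "(s \<cdot>\<^sub>m 1\<^sub>m nz - cmat N) *\<^sub>v u = 0\<^sub>v nz"
    using det_0_iff_vec_prod_zero_field[OF M] by auto
  have Nc: "cmat N \<in> carrier_mat nz nz" using N by simp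
  have h: "s \<cdot>\<^sub>v u - cmat N *\<^sub>v u = 0\<^sub>v nz" using char_mult_vec[OF Nc u(1)] u by simp
  define a where "a = rev u"
  define b where "b = imv u"
  have a: "a \<in> carrier_vec nz" and b: "b \<in> carrier_vec nz" unfolding a_def b_def using u by auto
  have Na: "N *\<^sub>v a = Re s \<cdot>\<^sub>v a - Im s \<cdot>\<^sub>v b" and Nb: "N *\<^sub>v b = Im s \<cdot>\<^sub>v a + Re s \<cdot>\<^sub>v b"
  proof -
    have e: "(cmat N *\<^sub>v u) $ i = s * u $ i" if "i < nz" for i
    proof -
      have "(s \<cdot>\<^sub>v u - cmat N *\<^sub>v u) $ i = 0" using h that by simp
      then show ?thesis using that u N by simp
    qed
    show "N *\<^sub>v a = Re s \<cdot>\<^sub>v a - Im s \<cdot>\<^sub>v b"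
    proof (rule eq_vecI)
      fix i assume "i < dim_vec (Re s \<cdot>\<^sub>v a - Im s \<cdot>\<^sub>v b)" then have i: "i < nz" using a b by simp
      have "(N *\<^sub>v a) $ i = Re ((cmat N *\<^sub>v u) $ i)" unfolding a_def using Re_cmat_mult_vec(1)[OF N u(1) i] by simp
      also have "\<dots> = Re s * a $ i - Im s * b $ i" unfolding e[OF i] a_def b_def using i u by (simp add: rev_def imv_def)
      finally show "(N *\<^sub>v a) $ i = (Re s \<cdot>\<^sub>v a - Im s \<cdot>\<^sub>v b) $ i" using i a b by simp
    qed (use N a b in auto)
    show "N *\<^sub>v b = Im s \<cdot>\<^sub>v a + Re s \<cdot>\<^sub>v b"
    proof (rule eq_vecI)
      fix i assume "i < dim_vec (Im s \<cdot>\<^sub>v a + Re s \<cdot>\<^sub>v b)" then have i: "i < nz" using b by simp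
      have "(N *\<^sub>v b) $ i = Im ((cmat N *\<^sub>v u) $ i)" unfolding b_def using Re_cmat_mult_vec(2)[OF N u(1) i] by simp
      also have "\<dots> = Im s * a $ i + Re s * b $ i" unfolding e[OF i] a_def b_def using i u by (simp add: rev_def imv_def)
      finally show "(N *\<^sub>v b) $ i = (Im s \<cdot>\<^sub>v a + Re s \<cdot>\<^sub>v b) $ i" using i a b by simp
    qed (use N a b in auto)
  qed
  have Pa: "P *\<^sub>v a \<in> carrier_vec nz" and Pb: "P *\<^sub>v b \<in> carrier_vec nz" using P a b by auto
  have ab: "(P *\<^sub>v b) \<bullet> a = (P *\<^sub>v a) \<bullet> b"
    using sym_form[OF P Ps b a] comm_scalar_prod[OF Pa b] comm_scalar_prod[OF Pb a] by simp
  have "a \<bullet> (X *\<^sub>v a) + b \<bullet> (X *\<^sub>v b) = 2 * ((P *\<^sub>v a) \<bullet> (N *\<^sub>v a)) + 2 * ((P *\<^sub>v b) \<bullet> (N *\<^sub>v b))"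
    using qf_X[OF N P Ps X a] qf_X[OF N P Ps X b] by simp
  also have "\<dots> = 2 * Re s * ((P *\<^sub>v a) \<bullet> a + (P *\<^sub>v b) \<bullet> b)"
    unfolding Na Nb using a b Pa Pb ab
    by (simp add: scalar_prod_minus_right[of _ nz] scalar_prod_add_distrib[of _ nz] algebra_simps)
  also have "\<dots> \<ge> 0"
    using Pp[OF a] Pp[OF b] comm_scalar_prod[OF Pa a] comm_scalar_prod[OF Pb b] s by simp
  finally have ge: "a \<bullet> (X *\<^sub>v a) + b \<bullet> (X *\<^sub>v b) \<ge> 0" .
  have Xc: "X \<in> carrier_mat nz nz" unfolding X using N P by auto
  have le: "x \<bullet> (X *\<^sub>v x) \<le> 0" if "x \<in> carrier_vec nz" for x
    using Xn[OF that] that Xc by (cases "x = 0\<^sub>v nz") (auto simp: less_imp_le)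
  have "a \<noteq> 0\<^sub>v nz \<or> b \<noteq> 0\<^sub>v nz"
  proof (rule ccontr)
    assume "\<not> (a \<noteq> 0\<^sub>v nz \<or> b \<noteq> 0\<^sub>v nz)"
    then have "a = 0\<^sub>v nz" "b = 0\<^sub>v nz" by auto
    then have "u = 0\<^sub>v nz"
      by (intro eq_vecI) (use u in \<open>auto simp: a_def b_def rev_def imv_def vec_eq_iff complex_eq_iff\<close>)
    then show False using u by simp
  qed
  then have "a \<bullet> (X *\<^sub>v a) + b \<bullet> (X *\<^sub>v b) < 0"
    using Xn[OF a] Xn[OF b] le[OF a] le[OF b] by auto
  then show False using ge by simp
qed


lemma sum_sq_transpose:
  fixes Q :: "real mat" and V :: "real mat"
  assumes Q: "Q \<in> carrier_mat nz m" and V: "V \<in> carrier_mat nz nz" and Vs: "transpose_mat V = V"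
    and x: "x \<in> carrier_vec nz"
  shows "(\<Sum>k<m. (x \<bullet> (V *\<^sub>v col Q k))^2) = (transpose_mat Q *\<^sub>v (V *\<^sub>v x)) \<bullet> (transpose_mat Q *\<^sub>v (V *\<^sub>v x))"
proof -
  have "x \<bullet> (V *\<^sub>v col Q k) = (transpose_mat Q *\<^sub>v (V *\<^sub>v x)) $ k" if k: "k < m" for k
  proof -
    have cQ: "col Q k \<in> carrier_vec nz" using Q k by auto
    have "x \<bullet> (V *\<^sub>v col Q k) = col Q k \<bullet> (V *\<^sub>v x)" by (rule sym_form[OF V Vs x cQ])
    also have "\<dots> = (transpose_mat Q *\<^sub>v (V *\<^sub>v x)) $ k" using Q k V x by simp
    finally show ?thesis .
  qed
  then have "(\<Sum>k<m. (x \<bullet> (V *\<^sub>v col Q k))^2) = (\<Sum>k<m. ((transpose_mat Q *\<^sub>v (V *\<^sub>v x)) $ k)^2)"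
    by (intro sum.cong) auto
  also have "\<dots> = (transpose_mat Q *\<^sub>v (V *\<^sub>v x)) \<bullet> (transpose_mat Q *\<^sub>v (V *\<^sub>v x))"
    using Q by (simp add: scalar_prod_def lessThan_atLeast0 power2_eq_square)
  finally show ?thesis .
qed

lemma pointwise_real:
  fixes N P V X Q R Bb :: "real mat" and a b c :: "real vec" and \<mu> \<gamma> :: real
  assumes N: "N \<in> carrier_mat nz nz" and P: "P \<in> carrier_mat nz nz" and V: "V \<in> carrier_mat nz nz"
    and Q: "Q \<in> carrier_mat nz m" and R: "R \<in> carrier_mat nz m" and Bb: "Bb \<in> carrier_mat nz (m + m)"
    and a: "a \<in> carrier_vec nz" and b: "b \<in> carrier_vec nz" and c: "c \<in> carrier_vec nz"
    and PV: "P * V = 1\<^sub>m nz" and Vs: "transpose_mat V = V" and Ps: "transpose_mat P = P"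
    and X: "X = transpose_mat N * P + P * N"
    and F4: "\<And>x. x \<in> carrier_vec nz \<Longrightarrow> x \<bullet> (X *\<^sub>v x) + ((transpose_mat Q *\<^sub>v x) \<bullet> (transpose_mat Q *\<^sub>v x) + (transpose_mat R *\<^sub>v x) \<bullet> (transpose_mat R *\<^sub>v x)) / \<gamma> \<le> 0"
    and g: "\<gamma> > 0"
    and BQ: "\<And>k. k < m \<Longrightarrow> col Bb k = V *\<^sub>v col Q k"
    and BR: "\<And>k. k < m \<Longrightarrow> col Bb (m + k) = - (V *\<^sub>v col R k)"
    and Na: "transpose_mat N *\<^sub>v a = - (\<mu> \<cdot>\<^sub>v b) - c"
    and Nb: "transpose_mat N *\<^sub>v b = \<mu> \<cdot>\<^sub>v a"
  shows "(\<Sum>k<m+m. (a \<bullet> col Bb k)^2 + (b \<bullet> col Bb k)^2) \<le> 2 * \<gamma> * (a \<bullet> (V *\<^sub>v c))"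
proof -
  define S where "S x = (transpose_mat Q *\<^sub>v (V *\<^sub>v x)) \<bullet> (transpose_mat Q *\<^sub>v (V *\<^sub>v x)) +
     (transpose_mat R *\<^sub>v (V *\<^sub>v x)) \<bullet> (transpose_mat R *\<^sub>v (V *\<^sub>v x))" for x
  have sumS: "(\<Sum>k<m+m. (x \<bullet> col Bb k)^2) = S x" if x: "x \<in> carrier_vec nz" for x
  proof -
    have "(\<Sum>k<m+m. (x \<bullet> col Bb k)^2) = (\<Sum>k<m. (x \<bullet> col Bb k)^2) + (\<Sum>k<m. (x \<bullet> col Bb (m + k))^2)"
      by (rule sum_split_mm)
    also have "(\<Sum>k<m. (x \<bullet> col Bb k)^2) = (\<Sum>k<m. (x \<bullet> (V *\<^sub>v col Q k))^2)"
      using BQ by simp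
    also have "(\<Sum>k<m. (x \<bullet> col Bb (m + k))^2) = (\<Sum>k<m. (x \<bullet> (V *\<^sub>v col R k))^2)"
      using BR x V R by simp
    finally show ?thesis unfolding S_def
      using sum_sq_transpose[OF Q V Vs x] sum_sq_transpose[OF R V Vs x] by simp
  qed
  have keyS: "S x \<le> - 2 * \<gamma> * ((transpose_mat N *\<^sub>v x) \<bullet> (V *\<^sub>v x))" if x: "x \<in> carrier_vec nz" for x
  proof -
    have Vx: "V *\<^sub>v x \<in> carrier_vec nz" using V x by auto
    have "(V *\<^sub>v x) \<bullet> (X *\<^sub>v (V *\<^sub>v x)) + S x / \<gamma> \<le> 0"
      using F4[OF Vx] unfolding S_def .
    then have "S x \<le> - \<gamma> * ((V *\<^sub>v x) \<bullet> (X *\<^sub>v (V *\<^sub>v x)))" using g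
      by (simp add: field_simps)
    also have "(V *\<^sub>v x) \<bullet> (X *\<^sub>v (V *\<^sub>v x)) = 2 * ((P *\<^sub>v (V *\<^sub>v x)) \<bullet> (N *\<^sub>v (V *\<^sub>v x)))"
      by (rule qf_X[OF N P Ps X Vx])
    also have "P *\<^sub>v (V *\<^sub>v x) = x" using assoc_mult_mat_vec[of P nz nz V nz x] PV P V x by simp
    also have "x \<bullet> (N *\<^sub>v (V *\<^sub>v x)) = (transpose_mat N *\<^sub>v x) \<bullet> (V *\<^sub>v x)"
      by (rule scalar_prod_transpose[OF N Vx x])
    finally show ?thesis by simp
  qed
  have Va: "V *\<^sub>v a \<in> carrier_vec nz" and Vb: "V *\<^sub>v b \<in> carrier_vec nz" using V a b by auto
  have "(transpose_mat N *\<^sub>v a) \<bullet> (V *\<^sub>v a) = - \<mu> * (b \<bullet> (V *\<^sub>v a)) - c \<bullet> (V *\<^sub>v a)"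
    unfolding Na using a b c Va V
    by (simp add: add_scalar_prod_distrib[of _ nz] minus_add_uminus_vec[of _ nz])
  moreover have "(transpose_mat N *\<^sub>v b) \<bullet> (V *\<^sub>v b) = \<mu> * (a \<bullet> (V *\<^sub>v b))"
    unfolding Nb using a b Vb by simp
  moreover have "b \<bullet> (V *\<^sub>v a) = a \<bullet> (V *\<^sub>v b)" by (rule sym_form[OF V Vs b a])
  moreover have "c \<bullet> (V *\<^sub>v a) = a \<bullet> (V *\<^sub>v c)" by (rule sym_form[OF V Vs c a])
  ultimately have e1: "(transpose_mat N *\<^sub>v a) \<bullet> (V *\<^sub>v a) = - \<mu> * (a \<bullet> (V *\<^sub>v b)) - a \<bullet> (V *\<^sub>v c)"
    and e2: "(transpose_mat N *\<^sub>v b) \<bullet> (V *\<^sub>v b) = \<mu> * (a \<bullet> (V *\<^sub>v b))" by simp_all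
  have "S a \<le> 2 * \<gamma> * \<mu> * (a \<bullet> (V *\<^sub>v b)) + 2 * \<gamma> * (a \<bullet> (V *\<^sub>v c))"
    using keyS[OF a] unfolding e1 by (simp add: algebra_simps)
  moreover have "S b \<le> - (2 * \<gamma> * \<mu> * (a \<bullet> (V *\<^sub>v b)))"
    using keyS[OF b] unfolding e2 by (simp add: algebra_simps)
  ultimately have "S a + S b \<le> 2 * \<gamma> * (a \<bullet> (V *\<^sub>v c))" by linarith
  then show ?thesis using sumS[OF a] sumS[OF b] by (simp add: sum.distrib)
qed

lemma cmat_transpose: "transpose_mat (cmat N) = cmat (transpose_mat N)"
  unfolding cmat_def by (intro eq_matI) auto

lemma pointwise_complex:
  fixes N P V X Q R Bb :: "real mat" and c :: "real vec" and \<mu> \<gamma> :: real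
  assumes N: "N \<in> carrier_mat nz nz" and P: "P \<in> carrier_mat nz nz" and V: "V \<in> carrier_mat nz nz"
    and Q: "Q \<in> carrier_mat nz m" and R: "R \<in> carrier_mat nz m" and Bb: "Bb \<in> carrier_mat nz (m + m)"
    and c: "c \<in> carrier_vec nz"
    and PV: "P * V = 1\<^sub>m nz" and Vs: "transpose_mat V = V" and Ps: "transpose_mat P = P"
    and X: "X = transpose_mat N * P + P * N"
    and F4: "\<And>x. x \<in> carrier_vec nz \<Longrightarrow> x \<bullet> (X *\<^sub>v x) + ((transpose_mat Q *\<^sub>v x) \<bullet> (transpose_mat Q *\<^sub>v x) + (transpose_mat R *\<^sub>v x) \<bullet> (transpose_mat R *\<^sub>v x)) / \<gamma> \<le> 0"
    and g: "\<gamma> > 0"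
    and BQ: "\<And>k. k < m \<Longrightarrow> col Bb k = V *\<^sub>v col Q k"
    and BR: "\<And>k. k < m \<Longrightarrow> col Bb (m + k) = - (V *\<^sub>v col R k)"
    and d: "det (Complex 0 \<mu> \<cdot>\<^sub>m 1\<^sub>m nz - cmat N) \<noteq> 0"
  shows "(\<Sum>k<m+m. (cmod (cv c \<bullet> (res (cmat N) (Complex 0 \<mu>) *\<^sub>v cv (col Bb k))))^2)
          \<le> 2 * \<gamma> * Re (cv c \<bullet> (res (cmat N) (Complex 0 \<mu>) *\<^sub>v cv (V *\<^sub>v c)))"
proof -
  define s where "s = Complex 0 \<mu>"
  define G where "G = res (cmat N) s"
  have Nc: "cmat N \<in> carrier_mat nz nz" using N by simp
  note rp = res_props[OF Nc d[folded s_def]]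
  have G: "G \<in> carrier_mat nz nz" unfolding G_def using rp by simp
  define y where "y = transpose_mat G *\<^sub>v cv c"
  have y: "y \<in> carrier_vec nz" unfolding y_def using G c by auto
  have yb: "cv c \<bullet> (G *\<^sub>v cv \<beta>) = y \<bullet> cv \<beta>" if "\<beta> \<in> carrier_vec nz" for \<beta>
    unfolding y_def using transpose_vec_mult_scalar[OF G, of "cv \<beta>" "cv c"] that c by simp
  have MT: "transpose_mat (s \<cdot>\<^sub>m 1\<^sub>m nz - cmat N) = s \<cdot>\<^sub>m 1\<^sub>m nz - cmat (transpose_mat N)"
    using N by (intro eq_matI) (auto simp: cmat_def)
  have NTc: "cmat (transpose_mat N) \<in> carrier_mat nz nz" using N by simp
  have "transpose_mat (s \<cdot>\<^sub>m 1\<^sub>m nz - cmat N) *\<^sub>v y = (transpose_mat (s \<cdot>\<^sub>m 1\<^sub>m nz - cmat N) * transpose_mat G) *\<^sub>v cv c"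
    unfolding y_def using G c N by (subst assoc_mult_mat_vec[of _ nz nz _ nz]) auto
  also have "transpose_mat (s \<cdot>\<^sub>m 1\<^sub>m nz - cmat N) * transpose_mat G = transpose_mat (G * (s \<cdot>\<^sub>m 1\<^sub>m nz - cmat N))"
  proof -
    have Mc: "s \<cdot>\<^sub>m 1\<^sub>m nz - cmat N \<in> carrier_mat nz nz" using Nc by auto
    show ?thesis using transpose_mult[OF G Mc] by simp
  qed
  also have "G * (s \<cdot>\<^sub>m 1\<^sub>m nz - cmat N) = 1\<^sub>m nz" unfolding G_def using rp by simp
  finally have eq0: "transpose_mat (s \<cdot>\<^sub>m 1\<^sub>m nz - cmat N) *\<^sub>v y = cv c" using c by simp
  have eq: "s \<cdot>\<^sub>v y - cmat (transpose_mat N) *\<^sub>v y = cv c"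
    using eq0 unfolding MT char_mult_vec[OF NTc y] .
  define a where "a = rev y"
  define b where "b = imv y"
  have a: "a \<in> carrier_vec nz" and b: "b \<in> carrier_vec nz" unfolding a_def b_def using y by auto
  have NT: "transpose_mat N \<in> carrier_mat nz nz" using N by simp
  have ej: "s * y $ j - (cmat (transpose_mat N) *\<^sub>v y) $ j = complex_of_real (c $ j)" if j: "j < nz" for j
  proof -
    have "(s \<cdot>\<^sub>v y - cmat (transpose_mat N) *\<^sub>v y) $ j = cv c $ j" using eq by simp
    then show ?thesis using j y N c by (simp add: cv_def)
  qed
  have Na: "transpose_mat N *\<^sub>v a = - (\<mu> \<cdot>\<^sub>v b) - c"
  proof (rule eq_vecI)
    fix j assume "j < dim_vec (- (\<mu> \<cdot>\<^sub>v b) - c)" then have j: "j < nz" using b c by simp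
    have "Re (s * y $ j - (cmat (transpose_mat N) *\<^sub>v y) $ j) = c $ j" using ej[OF j] by simp
    then have "- \<mu> * b $ j - (transpose_mat N *\<^sub>v a) $ j = c $ j"
      using Re_cmat_mult_vec(1)[OF NT y j] j y unfolding a_def b_def s_def by (simp add: imv_def)
    then show "(transpose_mat N *\<^sub>v a) $ j = (- (\<mu> \<cdot>\<^sub>v b) - c) $ j" using j b c by simp
  qed (use N a b c in auto)
  have Nb: "transpose_mat N *\<^sub>v b = \<mu> \<cdot>\<^sub>v a"
  proof (rule eq_vecI)
    fix j assume "j < dim_vec (\<mu> \<cdot>\<^sub>v a)" then have j: "j < nz" using a by simp
    have "Im (s * y $ j - (cmat (transpose_mat N) *\<^sub>v y) $ j) = 0" using ej[OF j] by simp
    then have "\<mu> * a $ j - (transpose_mat N *\<^sub>v b) $ j = 0"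
      using Re_cmat_mult_vec(2)[OF NT y j] j y unfolding a_def b_def s_def by (simp add: rev_def)
    then show "(transpose_mat N *\<^sub>v b) $ j = (\<mu> \<cdot>\<^sub>v a) $ j" using j a by simp
  qed (use N a b in auto)
  have pr: "(\<Sum>k<m+m. (a \<bullet> col Bb k)^2 + (b \<bullet> col Bb k)^2) \<le> 2 * \<gamma> * (a \<bullet> (V *\<^sub>v c))"
    by (rule pointwise_real[OF N P V Q R Bb a b c PV Vs Ps X F4 g BQ BR Na Nb])
  have "(cmod (cv c \<bullet> (G *\<^sub>v cv (col Bb k))))^2 = (a \<bullet> col Bb k)^2 + (b \<bullet> col Bb k)^2" if k: "k < m + m" for k
  proof -
    have cb: "col Bb k \<in> carrier_vec nz" using Bb k by auto
    show ?thesis unfolding yb[OF cb] cmod_power2 unfolding a_def b_def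
      using Re_scalar_cv[OF y cb] by simp
  qed
  moreover have "Re (cv c \<bullet> (G *\<^sub>v cv (V *\<^sub>v c))) = a \<bullet> (V *\<^sub>v c)"
  proof -
    have Vc: "V *\<^sub>v c \<in> carrier_vec nz" using V c by auto
    show ?thesis unfolding yb[OF Vc] a_def using Re_scalar_cv(1)[OF y Vc] by simp
  qed
  ultimately show ?thesis using pr unfolding G_def s_def by simp
qed

lemma nonneg_symm_integrable:
  fixes f :: "real \<Rightarrow> real"
  assumes cont: "continuous_on UNIV f" and nn: "\<And>x. 0 \<le> f x"
    and lim: "((\<lambda>L. integral {-L..L} f) \<longlongrightarrow> l) at_top"
  shows "f integrable_on UNIV" "integral UNIV f = l"
proof -
  define fk where "fk k x = (if x \<in> {-real k..real k} then f x else 0)" for k :: nat and x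
  have int_fk: "fk k integrable_on UNIV" for k
    unfolding fk_def integrable_restrict_UNIV
    by (rule integrable_continuous_interval) (rule continuous_on_subset[OF cont], auto)
  have ifk: "integral UNIV (fk k) = integral {-real k..real k} f" for k
    unfolding fk_def by (rule integral_restrict_UNIV)
  have mono: "fk k x \<le> fk (Suc k) x" for k x
    unfolding fk_def using nn[of x] by auto
  have ptw: "((\<lambda>k. fk k x) \<longlongrightarrow> f x) sequentially" for x
  proof (rule tendsto_eventually)
    obtain K :: nat where K: "\<bar>x\<bar> \<le> real K" using real_arch_simple by blast
    show "\<forall>\<^sub>F k in sequentially. fk k x = f x"
      using eventually_ge_at_top[of K]
      by eventually_elim (use K in \<open>auto simp: fk_def\<close>)
  qed
  have seq: "((\<lambda>k. integral {-real k..real k} f) \<longlongrightarrow> l) sequentially"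
    using filterlim_compose[OF lim filterlim_real_sequentially] by (simp add: o_def)
  have "bounded (range (\<lambda>k. integral UNIV (fk k)))"
    unfolding ifk using convergent_imp_bounded[OF seq] by (simp add: o_def)
  from monotone_convergence_increasing[OF int_fk mono ptw this]
  have res: "f integrable_on UNIV" "((\<lambda>k. integral UNIV (fk k)) \<longlongrightarrow> integral UNIV f) sequentially"
    by auto
  show "f integrable_on UNIV" by (rule res(1))
  show "integral UNIV f = l" using res(2) seq unfolding ifk by (rule LIMSEQ_unique)
qed

lemma mat_adjoint_carrier: "(A::complex mat) \<in> carrier_mat a b \<Longrightarrow> mat_adjoint A \<in> carrier_mat b a"
  unfolding mat_adjoint_def by auto

lemma mat_adjoint_index: assumes "(A::complex mat) \<in> carrier_mat a b" "i < b" "j < a"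
  shows "mat_adjoint A $$ (i,j) = cnj (A $$ (j,i))"
  using assms unfolding mat_adjoint_def by (auto simp: mat_of_rows_index)

lemma TTH_entry: assumes T: "(T::complex mat) \<in> carrier_mat a b" and i: "i < a" and j: "j < a"
  shows "(T * mat_adjoint T) $$ (i,j) = (\<Sum>k<b. T $$ (i,k) * cnj (T $$ (j,k)))"
proof -
  have "(T * mat_adjoint T) $$ (i,j) = row T i \<bullet> col (mat_adjoint T) j"
    using T i j mat_adjoint_carrier[OF T] by simp
  also have "\<dots> = (\<Sum>k<b. T $$ (i,k) * cnj (T $$ (j,k)))"
    using T i j mat_adjoint_carrier[OF T] mat_adjoint_index[OF T]
    by (auto simp: scalar_prod_def lessThan_atLeast0 intro!: sum.cong)
  finally show ?thesis .
qed

lemma triple_entry: assumes A: "(A::'a::comm_ring_1 mat) \<in> carrier_mat a b" and G: "G \<in> carrier_mat b b"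
  and B: "B \<in> carrier_mat b c" and i: "i < a" and k: "k < c"
  shows "(A * G * B) $$ (i,k) = row A i \<bullet> (G *\<^sub>v col B k)"
proof -
  have "A * G * B = A * (G * B)" using A G B by (rule assoc_mult_mat)
  moreover have "(A * (G * B)) $$ (i,k) = row A i \<bullet> col (G * B) k" using A G B i k by simp
  moreover have "col (G * B) k = G *\<^sub>v col B k" by (rule col_mult2[OF G B k])
  ultimately show ?thesis by simp
qed

lemma row_cmat: "M \<in> carrier_mat r c \<Longrightarrow> i < r \<Longrightarrow> row (cmat M) i = cv (row M i)"
  by (intro eq_vecI) (auto simp: cmat_def cv_def)

lemma col_cmat: "M \<in> carrier_mat r c \<Longrightarrow> k < c \<Longrightarrow> col (cmat M) k = cv (col M k)"
  by (intro eq_vecI) (auto simp: cmat_def cv_def)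

lemma hcat_col1: assumes "K \<in> carrier_mat r c1" "E \<in> carrier_mat r c2" "k < c1"
  shows "col (hcat K E) k = col K k"
  using assms by (intro eq_vecI) (auto simp: hcat_def)

lemma hcat_col2: assumes "K \<in> carrier_mat r c1" "E \<in> carrier_mat r c2" "k < c2"
  shows "col (hcat K E) (c1 + k) = col E k"
  using assms by (intro eq_vecI) (auto simp: hcat_def)

lemma sum_if_1r: "(\<Sum>j = 0..<(p::nat). f j * (if j = i then 1 else 0)) = (if i < p then f i else (0::'a::comm_ring_1))"
proof -
  have "(\<Sum>j = 0..<p. f j * (if j = i then 1 else 0)) = (\<Sum>j = 0..<p. if j = i then f j else 0)"
    by (intro sum.cong) auto
  then show ?thesis by (simp add: sum.delta)
qed

lemma sum_if_1l: "(\<Sum>j = 0..<(p::nat). (if j = i then 1 else 0) * f j) = (if i < p then f i else (0::'a::comm_ring_1))"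
proof -
  have "(\<Sum>j = 0..<p. (if j = i then 1 else 0) * f j) = (\<Sum>j = 0..<p. if j = i then f j else 0)"
    by (intro sum.cong) auto
  then show ?thesis by (simp add: sum.delta)
qed

lemma transpose_unit: assumes "(Cb::real mat) \<in> carrier_mat p nz" "i < p"
  shows "transpose_mat Cb *\<^sub>v unit_vec p i = row Cb i"
  using assms by (intro eq_vecI) (auto simp: scalar_prod_def unit_vec_def sum_if_1r sum_if_1l)

lemma unit_form: assumes "(Z::real mat) \<in> carrier_mat p p" "i < p"
  shows "unit_vec p i \<bullet> (Z *\<^sub>v unit_vec p i) = Z $$ (i,i)"
  using assms by (auto simp: scalar_prod_def unit_vec_def sum_if_1r sum_if_1l)

lemma Complex0_eq: "\<i> * complex_of_real \<mu> = Complex 0 \<mu>"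
  by (simp add: complex_eq_iff)

lemma cont_Complex0: "continuous_on UNIV (\<lambda>\<mu>::real. Complex 0 \<mu>)"
proof -
  have "continuous_on UNIV (\<lambda>\<mu>::real. \<i> * complex_of_real \<mu>)" by (intro continuous_intros)
  then show ?thesis by (simp add: Complex0_eq)
qed

lemma cont_rg:
  assumes A: "A \<in> carrier_mat n n" and c: "c \<in> carrier_vec n" and w: "w \<in> carrier_vec n"
    and nz: "\<And>s. 0 \<le> Re s \<Longrightarrow> det (s \<cdot>\<^sub>m 1\<^sub>m n - A) \<noteq> 0"
  shows "continuous_on UNIV (\<lambda>\<mu>. rg A c w (Complex 0 \<mu>))"
  by (rule continuous_on_compose2[OF holomorphic_on_imp_continuous_on[OF rg_holo[OF A c w]] cont_Complex0])
     (use nz in auto)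

theorem proposition3:
  fixes n m ng nw r :: nat
    and A S C D\<^sub>\<omega> P R Q Z :: "real mat" and \<gamma> :: real
  assumes "r \<ge> 1"
    and "A \<in> carrier_mat n n" and "S \<in> carrier_mat n ng" and "C \<in> carrier_mat m n"
    and "D\<^sub>\<omega> \<in> carrier_mat n nw"
  defines "nz \<equiv> n + r * ng" and "dn \<equiv> (r - 1) * ng"
  defines "Aa \<equiv> vcat (hcat A (hcat S (0\<^sub>m n dn)))
                 (vcat (hcat (0\<^sub>m dn n) (hcat (0\<^sub>m dn ng) (1\<^sub>m dn)))
                       (hcat (0\<^sub>m ng n) (hcat (0\<^sub>m ng ng) (0\<^sub>m ng dn))))"
    and "Da \<equiv> vcat (hcat D\<^sub>\<omega> (0\<^sub>m n ng))
                 (vcat (hcat (0\<^sub>m dn nw) (0\<^sub>m dn ng))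
                       (hcat (0\<^sub>m ng nw) (1\<^sub>m ng)))"
    and "Ca \<equiv> hcat C (0\<^sub>m m (r * ng))"
    and "Cba \<equiv> vcat (hcat (1\<^sub>m n) (hcat (0\<^sub>m n ng) (0\<^sub>m n dn)))
                  (hcat (0\<^sub>m ng n) (hcat (1\<^sub>m ng) (0\<^sub>m ng dn)))"
  assumes "P \<in> carrier_mat nz nz" and "pos_def P nz"
    and "R \<in> carrier_mat nz m" and "Q \<in> carrier_mat nz m"
    and "symmetric_mat Z (n + ng)"
    and "\<gamma> > 0"
  defines "X \<equiv> transpose_mat Aa * P + transpose_mat Aa * transpose_mat Ca * transpose_mat R
               - transpose_mat Ca * transpose_mat Q + P * Aa + R * Ca * Aa - Q * Ca"
  assumes "neg_def (vcat (hcat X (hcat Q (- R)))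
                   (vcat (hcat (transpose_mat Q) (hcat (- \<gamma> \<cdot>\<^sub>m 1\<^sub>m m) (0\<^sub>m m m)))
                         (hcat (transpose_mat (- R)) (hcat (0\<^sub>m m m) (- \<gamma> \<cdot>\<^sub>m 1\<^sub>m m)))))
                   (nz + 2 * m)"
    and "pos_def (vcat (hcat P (transpose_mat Cba)) (hcat Cba Z)) (nz + (n + ng))"
    and "mtrace Z < \<gamma>"
  defines "E \<equiv> minv P * R" and "K \<equiv> minv P * Q"
  defines "M \<equiv> 1\<^sub>m nz + E * Ca"
  defines "N \<equiv> M * Aa - K * Ca"
  defines "Bb \<equiv> hcat K (- E)"
  shows "H2_finite (n + ng) (transfer Cba N Bb)
         \<and> H2_norm (n + ng) (transfer Cba N Bb) < \<gamma>"
proof -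
  note A = assms(2) and Sc = assms(3) and Cc = assms(4)
  note Pc = assms(12) and posP = assms(13) and Rc = assms(14) and Qc = assms(15)
  note symZ = assms(16) and gpos = assms(17) and LMI1 = assms(19) and LMI2 = assms(20) and trZ = assms(21)
  define p where "p = n + ng"
  have dn_eq: "ng + dn = r * ng" using assms(1) unfolding dn_def by (cases r) auto
  have Aac: "Aa \<in> carrier_mat nz nz"
  proof -
    have "Aa \<in> carrier_mat (n + (dn + ng)) (n + (ng + dn))" unfolding Aa_def using A Sc
      by (intro vcat_carrier hcat_carrier) auto
    moreover have "n + (dn + ng) = nz" "n + (ng + dn) = nz" using dn_eq unfolding nz_def by auto
    ultimately show ?thesis by simp
  qed
  have Cac: "Ca \<in> carrier_mat m nz" unfolding Ca_def nz_def using Cc by (intro hcat_carrier) auto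
  have Cbc: "Cba \<in> carrier_mat p nz"
  proof -
    have "Cba \<in> carrier_mat (n + ng) (n + (ng + dn))" unfolding Cba_def
      by (intro vcat_carrier hcat_carrier) auto
    moreover have "n + (ng + dn) = nz" using dn_eq unfolding nz_def by auto
    ultimately show ?thesis unfolding p_def by simp
  qed
  have Ps: "transpose_mat P = P" using posP unfolding pos_def_def symmetric_mat_def by auto
  have detP: "det P \<noteq> 0"
  proof
    assume "det P = 0"
    then obtain v where v: "v \<in> carrier_vec nz" "v \<noteq> 0\<^sub>v nz" "P *\<^sub>v v = 0\<^sub>v nz"
      using det_0_iff_vec_prod_zero_field[OF Pc] by auto
    then have "v \<bullet> (P *\<^sub>v v) = 0" by simp
    moreover have "v \<bullet> (P *\<^sub>v v) > 0" by (rule pos_def_form(2)[OF posP v(1) v(2)])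
    ultimately show False by simp
  qed
  define V where "V = minv P"
  have Vc: "V \<in> carrier_mat nz nz" and PV: "P * V = 1\<^sub>m nz" and VP: "V * P = 1\<^sub>m nz"
    using minv_props[OF Pc detP] unfolding V_def by auto
  have VTP: "transpose_mat V * P = 1\<^sub>m nz"
    using transpose_mult[OF Pc Vc] PV Ps by simp
  have Vs: "transpose_mat V = V"
  proof -
    have "transpose_mat V = transpose_mat V * (P * V)" using Vc PV by simp
    also have "\<dots> = (transpose_mat V * P) * V" using Vc Pc by (simp add: assoc_mult_mat[of _ nz nz _ nz _ nz])
    also have "\<dots> = V" using VTP Vc by simp
    finally show ?thesis .
  qed
  have Ed: "E = V * R" unfolding E_def V_def ..
  have Kd: "K = V * Q" unfolding K_def V_def ..
  have Ec: "E \<in> carrier_mat nz m" unfolding Ed using Vc Rc by auto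
  have Kc: "K \<in> carrier_mat nz m" unfolding Kd using Vc Qc by auto
  have Mc: "M \<in> carrier_mat nz nz" unfolding M_def using Ec Cac by auto
  have Nc: "N \<in> carrier_mat nz nz" unfolding N_def using Mc Aac Kc Cac by auto
  have mEc: "- E \<in> carrier_mat nz m" using Ec by auto
  have Bbc: "Bb \<in> carrier_mat nz (m + m)" unfolding Bb_def using Kc mEc by (rule hcat_carrier)
  have Xeq: "X = transpose_mat N * P + P * N"
  proof -
    have PE: "P * E = R" unfolding Ed
      by (subst assoc_mult_mat[symmetric, OF Pc Vc Rc]) (simp add: PV left_mult_one_mat[OF Rc])
    have PK: "P * K = Q" unfolding Kd
      by (subst assoc_mult_mat[symmetric, OF Pc Vc Qc]) (simp add: PV left_mult_one_mat[OF Qc])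
    have ECa: "E * Ca \<in> carrier_mat nz nz" using Ec Cac by auto
    have PM: "P * M = P + R * Ca"
    proof -
      have "P * M = P * 1\<^sub>m nz + P * (E * Ca)" unfolding M_def
        by (rule mult_add_distrib_mat[OF Pc one_carrier_mat ECa])
      also have "P * (E * Ca) = (P * E) * Ca" by (rule assoc_mult_mat[symmetric, OF Pc Ec Cac])
      finally show ?thesis using Pc PE by simp
    qed
    have MAa: "M * Aa \<in> carrier_mat nz nz" using Mc Aac by auto
    have KCa: "K * Ca \<in> carrier_mat nz nz" using Kc Cac by auto
    have RCa: "R * Ca \<in> carrier_mat nz nz" using Rc Cac by auto
    have PN: "P * N = P * Aa + R * Ca * Aa - Q * Ca"
    proof -
      have "P * N = P * (M * Aa) - P * (K * Ca)" unfolding N_def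
        by (rule mult_minus_distrib_mat[OF Pc MAa KCa])
      also have "P * (M * Aa) = (P * M) * Aa" by (rule assoc_mult_mat[symmetric, OF Pc Mc Aac])
      also have "\<dots> = P * Aa + R * Ca * Aa" unfolding PM by (rule add_mult_distrib_mat[OF Pc RCa Aac])
      also have "P * (K * Ca) = (P * K) * Ca" by (rule assoc_mult_mat[symmetric, OF Pc Kc Cac])
      finally show ?thesis unfolding PK .
    qed
    have NTP: "transpose_mat N * P = transpose_mat (P * N)" using transpose_mult[OF Pc Nc] Ps by simp
    have PAa: "P * Aa \<in> carrier_mat nz nz" using Pc Aac by auto
    have RCaAa: "R * Ca * Aa \<in> carrier_mat nz nz" using RCa Aac by auto
    have QCa: "Q * Ca \<in> carrier_mat nz nz" using Qc Cac by auto
    have T1: "transpose_mat (P * Aa) = transpose_mat Aa * P" using transpose_mult[OF Pc Aac] Ps by simp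
    have T2: "transpose_mat (R * Ca * Aa) = transpose_mat Aa * transpose_mat Ca * transpose_mat R"
    proof -
      have "transpose_mat (R * Ca * Aa) = transpose_mat Aa * transpose_mat (R * Ca)"
        by (rule transpose_mult[OF RCa Aac])
      also have "transpose_mat (R * Ca) = transpose_mat Ca * transpose_mat R" by (rule transpose_mult[OF Rc Cac])
      also have "transpose_mat Aa * (transpose_mat Ca * transpose_mat R) = transpose_mat Aa * transpose_mat Ca * transpose_mat R"
        by (rule assoc_mult_mat[symmetric]) (use Aac Cac Rc in auto)
      finally show ?thesis .
    qed
    have T3: "transpose_mat (Q * Ca) = transpose_mat Ca * transpose_mat Q" by (rule transpose_mult[OF Qc Cac])
    have "transpose_mat N * P = transpose_mat Aa * P + transpose_mat Aa * transpose_mat Ca * transpose_mat R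
          - transpose_mat Ca * transpose_mat Q"
      unfolding NTP PN
      by (simp only: transpose_minus[OF add_carrier_mat[OF RCaAa] QCa] transpose_add[OF PAa RCaAa] T1 T2 T3)
    moreover have "transpose_mat Aa * P \<in> carrier_mat nz nz" using Aac Pc by auto
    moreover have "transpose_mat Aa * transpose_mat Ca * transpose_mat R \<in> carrier_mat nz nz" using Aac Cac Rc by auto
    moreover have "transpose_mat Ca * transpose_mat Q \<in> carrier_mat nz nz" using Cac Qc by auto
    ultimately show ?thesis unfolding X_def PN
      by (intro eq_matI) (auto simp: carrier_matD[OF Aac] carrier_matD[OF Pc] carrier_matD[OF Cac]
          carrier_matD[OF Rc] carrier_matD[OF Qc])
  qed
  have Xc: "X \<in> carrier_mat nz nz" unfolding Xeq using Nc Pc by auto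
  have F4: "\<And>x. x \<in> carrier_vec nz \<Longrightarrow> x \<bullet> (X *\<^sub>v x) + ((transpose_mat Q *\<^sub>v x) \<bullet> (transpose_mat Q *\<^sub>v x) + (transpose_mat R *\<^sub>v x) \<bullet> (transpose_mat R *\<^sub>v x)) / \<gamma> \<le> 0"
    using lmi1_conseq(1)[OF Xc Qc Rc gpos _ LMI1] by blast
  have Xn: "\<And>x. x \<in> carrier_vec nz \<Longrightarrow> x \<noteq> 0\<^sub>v nz \<Longrightarrow> x \<bullet> (X *\<^sub>v x) < 0"
    using lmi1_conseq(2)[OF Xc Qc Rc gpos _ LMI1] by blast
  have Pp: "\<And>x. x \<in> carrier_vec nz \<Longrightarrow> 0 \<le> x \<bullet> (P *\<^sub>v x)"
    using pos_def_form(1)[OF posP] by blast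
  have nzdet: "\<And>s. 0 \<le> Re s \<Longrightarrow> det (s \<cdot>\<^sub>m 1\<^sub>m nz - cmat N) \<noteq> 0"
    by (rule eigen_free[OF Nc Pc Ps Xeq Pp Xn])
  have BQ: "\<And>k. k < m \<Longrightarrow> col Bb k = V *\<^sub>v col Q k"
    unfolding Bb_def using hcat_col1[OF Kc mEc] Kd col_mult2[OF Vc Qc] by (simp del: col_mult)
  have BR: "\<And>k. k < m \<Longrightarrow> col Bb (m + k) = - (V *\<^sub>v col R k)"
    unfolding Bb_def using hcat_col2[OF Kc mEc] Ed col_mult2[OF Vc Rc] Vc Rc by (simp del: col_mult)
  have Ncc: "cmat N \<in> carrier_mat nz nz" using Nc by simp
  have Zc: "Z \<in> carrier_mat p p" using symZ unfolding symmetric_mat_def p_def by auto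
  have rowc: "row Cba i \<in> carrier_vec nz" if "i < p" for i using Cbc that by auto
  have colc: "col Bb k \<in> carrier_vec nz" if "k < m + m" for k using Bbc that by auto
  have Vrowc: "V *\<^sub>v row Cba i \<in> carrier_vec nz" if "i < p" for i using Vc rowc[OF that] by auto
  have dC0: "det (Complex 0 \<mu> \<cdot>\<^sub>m 1\<^sub>m nz - cmat N) \<noteq> 0" for \<mu> by (rule nzdet) simp
  define T where "T = transfer Cba N Bb"
  have Tform: "T s = cmat Cba * res (cmat N) s * cmat Bb" for s
  proof -
    have "dim_row (cmat N) = dim_row N" by (simp add: cmat_def)
    then show ?thesis unfolding T_def transfer_def res_def by simp
  qed
  define t where "t i k \<mu> = rg (cmat N) (cv (row Cba i)) (cv (col Bb k)) (Complex 0 \<mu>)" for i k \<mu>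
  have Tc: "T s \<in> carrier_mat p (m + m)" for s
  proof -
    have "dim_row (cmat Cba) = p" "dim_col (cmat Bb) = m + m" using Cbc Bbc by (auto simp: cmat_def)
    then show ?thesis unfolding Tform by (intro carrier_matI) simp_all
  qed
  have Tent: "T (Complex 0 \<mu>) $$ (i,k) = t i k \<mu>" if "i < p" "k < m + m" for i k \<mu>
  proof -
    have G: "res (cmat N) (Complex 0 \<mu>) \<in> carrier_mat nz nz" using res_props(1)[OF Ncc dC0] .
    have CC: "cmat Cba \<in> carrier_mat p nz" and BB: "cmat Bb \<in> carrier_mat nz (m + m)" using Cbc Bbc by auto
    show ?thesis unfolding Tform t_def rg_def triple_entry[OF CC G BB that]
      using row_cmat[OF Cbc that(1)] col_cmat[OF Bbc that(2)] by simp
  qed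
  have Hent: "H2_integrand T \<mu> $$ (i,j) = (\<Sum>k<m+m. t i k \<mu> * cnj (t j k \<mu>))" if "i < p" "j < p" for i j \<mu>
  proof -
    have "H2_integrand T \<mu> $$ (i,j) = (\<Sum>k<m+m. T (Complex 0 \<mu>) $$ (i,k) * cnj (T (Complex 0 \<mu>) $$ (j,k)))"
      unfolding H2_integrand_def Complex0_eq by (rule TTH_entry[OF Tc that])
    also have "\<dots> = (\<Sum>k<m+m. t i k \<mu> * cnj (t j k \<mu>))"
      by (intro sum.cong) (use that Tent in auto)
    finally show ?thesis .
  qed
  define hi where "hi i \<mu> = (\<Sum>k<m+m. (cmod (t i k \<mu>))^2)" for i \<mu>
  define h where "h \<mu> = (\<Sum>i<p. hi i \<mu>)" for \<mu>
  define gi where "gi i \<mu> = Re (rg (cmat N) (cv (row Cba i)) (cv (V *\<^sub>v row Cba i)) (Complex 0 \<mu>))" for i \<mu>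
  define f where "f \<mu> = (\<Sum>i<p. gi i \<mu>)" for \<mu>
  define kk where "kk i = row Cba i \<bullet> (V *\<^sub>v row Cba i)" for i
  have pw: "hi i \<mu> \<le> 2 * \<gamma> * gi i \<mu>" if "i < p" for i \<mu>
    using pointwise_complex[OF Nc Pc Vc Qc Rc Bbc rowc[OF that] PV Vs Ps Xeq F4 gpos BQ BR dC0]
    unfolding hi_def gi_def t_def rg_def by simp
  have hi_nn: "0 \<le> hi i \<mu>" for i \<mu> unfolding hi_def by (simp add: sum_nonneg)
  have gi_nn: "0 \<le> gi i \<mu>" if "i < p" for i \<mu>
  proof -
    have "0 \<le> 2 * \<gamma> * gi i \<mu>" using pw[OF that, of \<mu>] hi_nn[of i \<mu>] by linarith
    then show ?thesis using gpos by (simp add: zero_le_mult_iff)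
  qed
  have f_nn: "0 \<le> f \<mu>" for \<mu> unfolding f_def by (intro sum_nonneg gi_nn) simp
  have h_nn: "0 \<le> h \<mu>" for \<mu> unfolding h_def by (simp add: sum_nonneg hi_nn)
  have hf: "h \<mu> \<le> 2 * \<gamma> * f \<mu>" for \<mu>
    unfolding h_def f_def sum_distrib_left by (intro sum_mono pw) auto
  have hi_le_h: "hi i \<mu> \<le> h \<mu>" if "i < p" for i \<mu>
    unfolding h_def using that hi_nn by (intro member_le_sum) auto
  have cont_t: "continuous_on UNIV (t i k)" if "i < p" "k < m + m" for i k
    unfolding t_def using cont_rg[OF Ncc _ _ nzdet] rowc[OF that(1)] colc[OF that(2)] by simp
  have cont_gi: "continuous_on UNIV (gi i)" if "i < p" for i
    unfolding gi_def using cont_rg[OF Ncc _ _ nzdet] rowc[OF that] Vrowc[OF that]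
    by (intro continuous_intros) simp
  have cont_hi: "continuous_on UNIV (hi i)" if "i < p" for i
    unfolding hi_def by (intro continuous_intros cont_t that) auto
  have cont_h: "continuous_on UNIV h" unfolding h_def by (intro continuous_intros cont_hi) auto
  have cont_f: "continuous_on UNIV f" unfolding f_def by (intro continuous_intros cont_gi) auto
  have cvdot: "cv a \<bullet> cv b = complex_of_real (a \<bullet> b)" if "a \<in> carrier_vec nz" "b \<in> carrier_vec nz" for a b
    using that by (simp add: cv_def scalar_prod_def)
  have lim_gi: "((\<lambda>L. integral {-L..L} (gi i)) \<longlongrightarrow> pi * kk i) at_top" if i: "i < p" for i
  proof -
    have c1: "cv (row Cba i) \<in> carrier_vec nz" and c2: "cv (V *\<^sub>v row Cba i) \<in> carrier_vec nz"
      using rowc[OF i] Vrowc[OF i] by auto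
    note ri = rg_integral[OF Ncc c1 c2 nzdet]
    have "((\<lambda>L. Re (integral {-L..L} (\<lambda>\<mu>. rg (cmat N) (cv (row Cba i)) (cv (V *\<^sub>v row Cba i)) (Complex 0 \<mu>))))
          \<longlongrightarrow> Re (pi * (cv (row Cba i) \<bullet> cv (V *\<^sub>v row Cba i)))) at_top"
      by (rule tendsto_Re[OF ri(1)])
    moreover have "Re (pi * (cv (row Cba i) \<bullet> cv (V *\<^sub>v row Cba i))) = pi * kk i"
      unfolding kk_def cvdot[OF rowc[OF i] Vrowc[OF i]] by simp
    moreover have "integral {-L..L} (gi i) = Re (integral {-L..L} (\<lambda>\<mu>. rg (cmat N) (cv (row Cba i)) (cv (V *\<^sub>v row Cba i)) (Complex 0 \<mu>)))" for L
      unfolding gi_def using integral_linear[OF ri(2)[of L] bounded_linear_Re] by (simp add: o_def)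
    ultimately show ?thesis by simp
  qed
  have lim_f: "((\<lambda>L. integral {-L..L} f) \<longlongrightarrow> (\<Sum>i<p. pi * kk i)) at_top"
  proof -
    have "integral {-L..L} f = (\<Sum>i<p. integral {-L..L} (gi i))" for L
      unfolding f_def
      by (rule Henstock_Kurzweil_Integration.integral_sum)
         (auto intro!: integrable_continuous_interval continuous_on_subset[OF cont_gi])
    then show ?thesis using tendsto_sum[of "{..<p}" "\<lambda>i L. integral {-L..L} (gi i)"] lim_gi by simp
  qed
  note fint = nonneg_symm_integrable[OF cont_f f_nn lim_f]
  have f2int: "(\<lambda>\<mu>. 2 * \<gamma> * f \<mu>) integrable_on UNIV"
    using integrable_cmul[OF fint(1), of "2 * \<gamma>"] by simp
  have h_int: "h integrable_on UNIV"
    by (rule measurable_bounded_by_integrable_imp_integrable[OF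
          continuous_imp_measurable_on_sets_lebesgue[OF cont_h] f2int])
       (use hf h_nn in auto)
  have hi_int: "hi i integrable_on UNIV" if "i < p" for i
    by (rule measurable_bounded_by_integrable_imp_integrable[OF
          continuous_imp_measurable_on_sets_lebesgue[OF cont_hi[OF that]] h_int])
       (use hi_nn hi_le_h[OF that] in auto)
  have int_h_le: "integral UNIV h \<le> 2 * \<gamma> * (\<Sum>i<p. pi * kk i)"
  proof -
    have "integral UNIV h \<le> integral UNIV (\<lambda>\<mu>. 2 * \<gamma> * f \<mu>)"
      by (rule integral_le[OF h_int f2int hf])
    also have "\<dots> = 2 * \<gamma> * integral UNIV f" using integral_mult[OF fint(1), of "2 * \<gamma>"] by simp
    finally show ?thesis using fint(2) by simp
  qed
  have LMI2': "pos_def (vcat (hcat P (transpose_mat Cba)) (hcat Cba Z)) (nz + p)"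
    using LMI2 unfolding p_def .
  have kk_le: "kk i \<le> Z $$ (i,i)" if i: "i < p" for i
    using lmi2_conseq[OF Pc Cbc Zc Vc PV LMI2' unit_vec_carrier[of p i]]
    unfolding transpose_unit[OF Cbc i] unit_form[OF Zc i] kk_def .
  have trZ': "mtrace Z = (\<Sum>i<p. Z $$ (i,i))" unfolding mtrace_def using Zc by simp
  have sumkk: "(\<Sum>i<p. kk i) < \<gamma>"
    using sum_mono[of "{..<p}" kk "\<lambda>i. Z $$ (i,i)"] kk_le trZ trZ' by fastforce
  have fin: "H2_finite p T"
    unfolding H2_finite_def
  proof (intro allI impI)
    fix i j assume i: "i < p" and j: "j < p"
    have eqf: "(\<lambda>\<mu>. H2_integrand T \<mu> $$ (i,j)) = (\<lambda>\<mu>. \<Sum>k<m+m. t i k \<mu> * cnj (t j k \<mu>))"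
      using Hent[OF i j] by auto
    have cont: "continuous_on UNIV (\<lambda>\<mu>. \<Sum>k<m+m. t i k \<mu> * cnj (t j k \<mu>))"
      by (intro continuous_intros cont_t i j) auto
    have bnd: "norm (\<Sum>k<m+m. t i k \<mu> * cnj (t j k \<mu>)) \<le> h \<mu>" for \<mu>
    proof -
      have "norm (\<Sum>k<m+m. t i k \<mu> * cnj (t j k \<mu>)) \<le> (\<Sum>k<m+m. cmod (t i k \<mu>) * cmod (t j k \<mu>))"
        by (rule order_trans[OF norm_sum]) (simp add: norm_mult)
      also have "\<dots> \<le> (\<Sum>k<m+m. ((cmod (t i k \<mu>))^2 + (cmod (t j k \<mu>))^2) / 2)"
      proof (rule sum_mono)
        fix k
        have "0 \<le> (cmod (t i k \<mu>) - cmod (t j k \<mu>))^2" by simp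
        then show "cmod (t i k \<mu>) * cmod (t j k \<mu>) \<le> ((cmod (t i k \<mu>))^2 + (cmod (t j k \<mu>))^2) / 2"
          by (simp add: power2_eq_square algebra_simps)
      qed
      also have "\<dots> = (hi i \<mu> + hi j \<mu>) / 2" unfolding hi_def by (simp add: sum.distrib flip: sum_divide_distrib)
      also have "\<dots> \<le> h \<mu>" using hi_le_h[OF i, of \<mu>] hi_le_h[OF j, of \<mu>] by simp
      finally show ?thesis .
    qed
    show "(\<lambda>\<mu>. H2_integrand T \<mu> $$ (i, j)) integrable_on UNIV"
      unfolding eqf
      by (rule measurable_bounded_by_integrable_imp_integrable[OF
          continuous_imp_measurable_on_sets_lebesgue[OF cont] h_int])
         (use bnd in auto)
  qed
  have diag: "H2_integrand T \<mu> $$ (i,i) = complex_of_real (hi i \<mu>)" if i: "i < p" for i \<mu>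
    unfolding Hent[OF i i] hi_def by (simp only: of_real_sum complex_norm_square)
  have intdiag: "integral UNIV (\<lambda>\<mu>. H2_integrand T \<mu> $$ (i,i)) = complex_of_real (integral UNIV (hi i))"
    if i: "i < p" for i
    unfolding diag[OF i] using integral_linear[OF hi_int[OF i] bounded_linear_of_real] by (simp add: o_def)
  have mt: "mtrace (mat p p (\<lambda>(i,j). integral UNIV (\<lambda>\<mu>. H2_integrand T \<mu> $$ (i,j))))
        = (\<Sum>i<p. complex_of_real (integral UNIV (hi i)))"
    unfolding mtrace_def by (simp add: intdiag)
  have "Re (mtrace (mat p p (\<lambda>(i,j). integral UNIV (\<lambda>\<mu>. H2_integrand T \<mu> $$ (i,j)))))
        = integral UNIV h"
  proof -
    have "integral UNIV (\<lambda>\<mu>. \<Sum>i<p. hi i \<mu>) = (\<Sum>i<p. integral UNIV (hi i))"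
      by (rule Henstock_Kurzweil_Integration.integral_sum) (auto intro: hi_int)
    then show ?thesis using mt unfolding h_def by simp
  qed
  then have Hn: "H2_norm p T = sqrt ((1 / (2 * pi)) * integral UNIV h)"
    unfolding H2_norm_def by simp
  have "(1 / (2 * pi)) * integral UNIV h < \<gamma>^2"
  proof -
    have "integral UNIV h \<le> 2 * \<gamma> * pi * (\<Sum>i<p. kk i)"
      using int_h_le by (simp add: sum_distrib_left mult_ac)
    also have "\<dots> < 2 * \<gamma> * pi * \<gamma>" using sumkk gpos by simp
    finally show ?thesis by (simp add: field_simps power2_eq_square)
  qed
  then have "H2_norm p T < sqrt (\<gamma>^2)" unfolding Hn by (rule real_sqrt_less_mono)
  then have nrm: "H2_norm p T < \<gamma>" using gpos by simp
  show ?thesis using fin nrm unfolding T_def p_def by simp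
qed

end
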